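(* Assume (H), (H1), and that $L$ has the KL-property at some $\bar z$, with associated $\eta\in(0,\infty]$, neighborhood $U$ and function $\varphi$. Let $\rho>0$ be such that $B(\bar z,\rho)\subset U$, let $C$ be a Lipschitz constant of $\nabla Q$ on $B(\bar z,\sqrt{2R}\rho)$, and $M=2r_+(C\sqrt{2R}+1/r_-)$. Let $(z_k)$ be generated by PAM from $z_0$, write $l_k=L(z_k)$, $\bar l=L(\bar z)$, and assume $\bar l<l_k<\bar l+\eta$ for all $k\ge0$ and $$M\varphi(l_0-\bar l)+2\sqrt{2r_+}\sqrt{l_0-\bar l}+\|z_0-\bar z\|_2<\rho.$$ Then $(z_k)$ converges to a critical point of $L$, and for all $k\ge0$: (i) $z_k\in B(\bar z,\rho)$; (ii) $\sum_{i=k+1}^\infty\|z_{i+1}-z_i\|_2\le M\varphi(l_k-\bar l)+\sqrt{2r_+}\sqrt{l_k-\bar l}$.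
   Context: Setting: $L(u^1,\dots,u^R,v^1,\dots,v^R)=\sum_{r=1}^Rf_r(u^r)+Q(u^1,\dots,v^R)+\sum_{r=1}^Rg_r(v^r)$ on $(\mathbb{R}^{n_1})^R\times(\mathbb{R}^{n_2})^R$. (H): $f_r,g_r$ proper lower semicontinuous with values in $\mathbb{R}\cup\{\infty\}$; $Q$ real-valued $C^1$ with $\nabla Q$ Lipschitz on bounded sets. (H1): $\inf L>-\infty$, $L(\cdot,u_0^2,\dots,v_0^R)$ proper, all proximal parameters $\lambda_k^r,\mu_k^r\in(r_-,r_+)$ for some $0<r_-<r_+$. PAM: for $k\ge0$, $r=1,\dots,R$ in order, $u_{k+1}^r\in\arg\min_u L(u_{k+1}^1,\dots,u_{k+1}^{r-1},u,u_k^{r+1},\dots,u_k^R,v_{k+1}^1,\dots,v_{k+1}^{r-1},v_k^r,\dots,v_k^R)+\frac{1}{2\lambda_k^r}\|u-u_k^r\|_2^2$, $v_{k+1}^r\in\arg\min_v L(u_{k+1}^1,\dots,u_{k+1}^r,u_k^{r+1},\dots,u_k^R,v_{k+1}^1,\dots,v_{k+1}^{r-1},v,v_k^{r+1},\dots,v_k^R)+\frac{1}{2\mu_k^r}\|v-v_k^r\|_2^2$; $z_k=(u_k^1,\dots,v_k^R)$. $\partial$ is the limiting subdifferential; critical points are $z$ with $0\in\partial L(z)$. KL-property: a proper lsc $f:\mathbb{R}^n\to\mathbb{R}\cup\{\infty\}$ has the KL-property at $\bar x\in\mathrm{dom}\,\partial f$ if there exist $\eta\in(0,\infty]$, a neighborhood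 $U$ of $\bar x$, and a continuous concave $\varphi:[0,\eta)\to[0,\infty)$ with $\varphi(0)=0$, $\varphi\in C^1(0,\eta)$, $\varphi'>0$ on $(0,\eta)$, such that $\varphi'(f(x)-f(\bar x))\,\mathrm{dist}(0,\partial f(x))\ge1$ for all $x\in U$ with $f(\bar x)<f(x)<f(\bar x)+\eta$. *)

theory Defs
  imports "HOL-Analysis.Analysis" "HOL-Library.Extended_Real"
begin

definition proper_fun :: "('a \<Rightarrow> ereal) \<Rightarrow> bool" where
  "proper_fun f \<longleftrightarrow> (\<forall>x. f x \<noteq> -\<infinity>) \<and> (\<exists>x. f x \<noteq> \<infinity>)"

definition lsc_fun :: "('a::topological_space \<Rightarrow> ereal) \<Rightarrow> bool" where
  "lsc_fun f \<longleftrightarrow> (\<forall>x. f x \<le> Liminf (at x) f)"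

text \<open>Frechet (regular) subdifferential, liminf written out.\<close>
definition frechet_subdiff :: "('a::real_inner \<Rightarrow> ereal) \<Rightarrow> 'a \<Rightarrow> 'a set" where
  "frechet_subdiff f x = {w. \<bar>f x\<bar> \<noteq> \<infinity> \<and>
      (\<forall>e>0. \<exists>d>0. \<forall>y. norm (y - x) < d \<longrightarrow>
          f y \<ge> f x + ereal (inner w (y - x) - e * norm (y - x)))}"

definition limiting_subdiff :: "('a::real_inner \<Rightarrow> ereal) \<Rightarrow> 'a \<Rightarrow> 'a set" where
  "limiting_subdiff f x = {w. \<exists>xs ws. xs \<longlonglongrightarrow> x \<and> (\<lambda>k. f (xs k)) \<longlonglongrightarrow> f x \<and>
      (\<forall>k. ws k \<in> frechet_subdiff f (xs k)) \<and> ws \<longlonglongrightarrow> w}"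

text \<open>KL property at xbar with the given eta, U, phi.
  The distance dist(0, empty set) is +infinity, so the inequality is vacuous there.\<close>
definition KL_at :: "('a::euclidean_space \<Rightarrow> ereal) \<Rightarrow> 'a \<Rightarrow> ereal \<Rightarrow> 'a set \<Rightarrow> (real \<Rightarrow> real) \<Rightarrow> bool" where
  "KL_at f xbar \<eta> U \<phi> \<longleftrightarrow>
     limiting_subdiff f xbar \<noteq> {} \<and>
     \<eta> > 0 \<and> xbar \<in> interior U \<and>
     continuous_on {t. 0 \<le> t \<and> ereal t < \<eta>} \<phi> \<and>
     concave_on {t. 0 \<le> t \<and> ereal t < \<eta>} \<phi> \<and>
     \<phi> 0 = 0 \<and> (\<forall>t. 0 \<le> t \<and> ereal t < \<eta> \<longrightarrow> 0 \<le> \<phi> t) \<and>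
     (\<forall>t. 0 < t \<and> ereal t < \<eta> \<longrightarrow> \<phi> differentiable (at t)) \<and>
     continuous_on {t. 0 < t \<and> ereal t < \<eta>} (deriv \<phi>) \<and>
     (\<forall>t. 0 < t \<and> ereal t < \<eta> \<longrightarrow> deriv \<phi> t > 0) \<and>
     (\<forall>x\<in>U. f xbar < f x \<and> f x < f xbar + \<eta> \<longrightarrow>
        limiting_subdiff f x = {} \<or>
        deriv \<phi> (real_of_ereal (f x - f xbar)) * infdist 0 (limiting_subdiff f x) \<ge> 1)"

text \<open>Blocks are indexed by a finite linearly ordered type 'r (so R = CARD('r)),
  processed in increasing order. A point z = (u, v) with u $ r = u^r, v $ r = v^r.\<close>

type_synonym ('n1, 'n2, 'r) pt = "((real^'n1)^'r) \<times> ((real^'n2)^'r)"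

definition mix :: "('b, 'r::{finite,linorder}) vec \<Rightarrow> ('b, 'r) vec \<Rightarrow> 'r \<Rightarrow> 'b \<Rightarrow> ('b, 'r) vec" where
  "mix new old r x = (\<chi> s. if s < r then new $ s else if s = r then x else old $ s)"

definition Lfun :: "('r::finite \<Rightarrow> real^'n1::finite \<Rightarrow> ereal) \<Rightarrow> (('n1,'n2,'r) pt \<Rightarrow> real)
     \<Rightarrow> ('r \<Rightarrow> real^'n2 \<Rightarrow> ereal) \<Rightarrow> ('n1,'n2,'r) pt \<Rightarrow> ereal" where
  "Lfun f Q g z = (\<Sum>r\<in>UNIV. f r (fst z $ r)) + ereal (Q z) + (\<Sum>r\<in>UNIV. g r (snd z $ r))"

definition PAM_seq :: "(('n1::finite,'n2::finite,'r::{finite,linorder}) pt \<Rightarrow> ereal) \<Rightarrow> (nat \<Rightarrow> 'r \<Rightarrow> real)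
     \<Rightarrow> (nat \<Rightarrow> 'r \<Rightarrow> real) \<Rightarrow> (nat \<Rightarrow> ('n1,'n2,'r) pt) \<Rightarrow> bool" where
  "PAM_seq L lam mu z \<longleftrightarrow> (\<forall>k r.
     let uk = fst (z k); vk = snd (z k); uk1 = fst (z (Suc k)); vk1 = snd (z (Suc k));
         Uobj = (\<lambda>x. L (mix uk1 uk r x, mix vk1 vk r (vk $ r))
                    + ereal (norm (x - uk $ r) ^ 2 / (2 * lam k r)));
         Vobj = (\<lambda>y. L (mix uk1 uk r (uk1 $ r), mix vk1 vk r y)
                    + ereal (norm (y - vk $ r) ^ 2 / (2 * mu k r)))
     in (\<forall>x. Uobj (uk1 $ r) \<le> Uobj x) \<and> (\<forall>y. Vobj (vk1 $ r) \<le> Vobj y))"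

end

theory Submission
  imports Defs
begin

lemma normsq_vec: "(norm (x::('a::real_normed_vector)^'b::finite))^2 = (\<Sum>r\<in>UNIV. (norm (x $ r))^2)"
  unfolding norm_vec_def L2_set_def by (simp add: sum_nonneg)

lemma normsq_pt: "(norm (x::('n1::finite,'n2::finite,'r::finite) pt))^2
   = (\<Sum>r\<in>UNIV. (norm (fst x $ r))^2) + (\<Sum>r\<in>UNIV. (norm (snd x $ r))^2)"
proof -
  obtain a b where x: "x = (a,b)" by force
  have "(norm (a,b))^2 = (norm a)^2 + (norm b)^2" unfolding norm_Pair by simp
  then show ?thesis unfolding x fst_conv snd_conv normsq_vec[of a] normsq_vec[of b] .
qed

lemma norm_block_fst: "norm (fst (x::('n1::finite,'n2::finite,'r::finite) pt) $ r) \<le> norm x"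
  using Finite_Cartesian_Product.norm_nth_le[of "fst x" r] norm_fst_le[of "fst x" "snd x"] by simp
lemma norm_block_snd: "norm (snd (x::('n1::finite,'n2::finite,'r::finite) pt) $ r) \<le> norm x"
  using Finite_Cartesian_Product.norm_nth_le[of "snd x" r] norm_snd_le[of "snd x" "fst x"] by simp

definition blockfrom :: "('n1::finite,'n2::finite,'r::finite) pt \<Rightarrow> ('n1,'n2,'r) pt \<Rightarrow> ('n1,'n2,'r) pt \<Rightarrow> bool" where
  "blockfrom P A B \<longleftrightarrow> (\<forall>r. (fst P $ r = fst A $ r \<or> fst P $ r = fst B $ r) \<and> (snd P $ r = snd A $ r \<or> snd P $ r = snd B $ r))"

lemma blockfrom_ball:
  assumes "blockfrom P A B"
  shows "(norm (P - c))^2 \<le> (norm (A - c))^2 + (norm (B - c))^2"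
proof -
  have 1: "(norm (fst (P - c) $ r))^2 \<le> (norm (fst (A - c) $ r))^2 + (norm (fst (B - c) $ r))^2" for r
    using assms unfolding blockfrom_def by (cases "fst P $ r = fst A $ r") auto
  have 2: "(norm (snd (P - c) $ r))^2 \<le> (norm (snd (A - c) $ r))^2 + (norm (snd (B - c) $ r))^2" for r
    using assms unfolding blockfrom_def by (cases "snd P $ r = snd A $ r") auto
  have "(norm (P - c))^2 \<le> (\<Sum>r\<in>UNIV. (norm (fst (A - c) $ r))^2 + (norm (fst (B - c) $ r))^2)
      + (\<Sum>r\<in>UNIV. (norm (snd (A - c) $ r))^2 + (norm (snd (B - c) $ r))^2)"
    unfolding normsq_pt by (intro add_mono sum_mono 1 2)
  also have "\<dots> = (norm (A - c))^2 + (norm (B - c))^2"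
    unfolding normsq_pt sum.distrib by simp
  finally show ?thesis .
qed

lemma blockfrom_dist:
  assumes "blockfrom P A B"
  shows "norm (P - A) \<le> norm (B - A)"
proof -
  have 1: "(norm (fst (P - A) $ r))^2 \<le> (norm (fst (B - A) $ r))^2" for r
    using assms unfolding blockfrom_def by (cases "fst P $ r = fst A $ r"; cases "snd P $ r = snd A $ r") auto
  have 2: "(norm (snd (P - A) $ r))^2 \<le> (norm (snd (B - A) $ r))^2" for r
    using assms unfolding blockfrom_def by (cases "fst P $ r = fst A $ r"; cases "snd P $ r = snd A $ r") auto
  have "(norm (P - A))^2 \<le> (norm (B - A))^2"
    unfolding normsq_pt by (intro add_mono sum_mono 1 2)
  then show ?thesis by (simp add: power_mono_iff)
qed

lemma mix_nth: "mix new old r x $ s = (if s < r then new $ s else if s = r then x else old $ s)"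
  unfolding mix_def by simp

locale pam =
  fixes f :: "'r::{finite,linorder} \<Rightarrow> real^'n1::finite \<Rightarrow> ereal"
    and g :: "'r \<Rightarrow> real^'n2::finite \<Rightarrow> ereal"
    and Q :: "('n1,'n2,'r) pt \<Rightarrow> real"
    and gradQ :: "('n1,'n2,'r) pt \<Rightarrow> ('n1,'n2,'r) pt"
    and lam mu :: "nat \<Rightarrow> 'r \<Rightarrow> real"
    and rminus rplus :: real
    and z :: "nat \<Rightarrow> ('n1,'n2,'r) pt"
    and L :: "('n1,'n2,'r) pt \<Rightarrow> ereal"
  assumes L_def: "L = Lfun f Q g"
    and f_proper: "\<And>r. proper_fun (f r)" and f_lsc: "\<And>r. lsc_fun (f r)"
    and g_proper: "\<And>r. proper_fun (g r)" and g_lsc: "\<And>r. lsc_fun (g r)"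
    and Q_grad: "\<And>x. (Q has_derivative (\<lambda>h. inner (gradQ x) h)) (at x)"
    and L_bdd: "\<exists>m::real. \<forall>x. ereal m \<le> L x"
    and r_pos: "0 < rminus" and r_lt: "rminus < rplus"
    and lam_bnd: "\<And>k r. rminus < lam k r \<and> lam k r < rplus"
    and mu_bnd: "\<And>k r. rminus < mu k r \<and> mu k r < rplus"
    and PAM: "PAM_seq L lam mu z"
    and l_fin: "\<And>k. \<bar>L (z k)\<bar> \<noteq> \<infinity>"
begin

definition "Pu k r x = (mix (fst (z (Suc k))) (fst (z k)) r x, mix (snd (z (Suc k))) (snd (z k)) r (snd (z k) $ r))"
definition "Pv k r y = (mix (fst (z (Suc k))) (fst (z k)) r (fst (z (Suc k)) $ r), mix (snd (z (Suc k))) (snd (z k)) r y)"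
definition "Bpt k r = Pu k r (fst (z k) $ r)"
definition "Mid k r = Pu k r (fst (z (Suc k)) $ r)"
definition "Apt k r = Pv k r (snd (z (Suc k)) $ r)"

lemma Mid_Pv: "Mid k r = Pv k r (snd (z k) $ r)"
  unfolding Mid_def Pu_def Pv_def by simp

lemma PU: "L (Mid k r) + ereal ((norm (fst (z (Suc k)) $ r - fst (z k) $ r))^2 / (2 * lam k r))
   \<le> L (Pu k r x) + ereal ((norm (x - fst (z k) $ r))^2 / (2 * lam k r))"
  using PAM unfolding PAM_seq_def Let_def Mid_def Pu_def by blast

lemma PV: "L (Apt k r) + ereal ((norm (snd (z (Suc k)) $ r - snd (z k) $ r))^2 / (2 * mu k r))
   \<le> L (Pv k r y) + ereal ((norm (y - snd (z k) $ r))^2 / (2 * mu k r))"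
  using PAM unfolding PAM_seq_def Let_def Apt_def Pv_def by blast

definition "cc k s = ((norm (fst (z (Suc k)) $ s - fst (z k) $ s))^2 + (norm (snd (z (Suc k)) $ s - snd (z k) $ s))^2) / (2 * rplus)"

lemma cc_nonneg: "0 \<le> cc k s"
  unfolding cc_def using r_pos r_lt by simp

lemma block_step: "L (Apt k r) + ereal (cc k r) \<le> L (Bpt k r)"
  and block_step2: "L (Mid k r) \<le> L (Bpt k r)"
  and block_step3: "L (Mid k r) + ereal ((norm (fst (z (Suc k)) $ r - fst (z k) $ r))^2 / (2 * rplus)) \<le> L (Bpt k r)"
proof -
  define a where "a = (norm (fst (z (Suc k)) $ r - fst (z k) $ r))^2"
  define b where "b = (norm (snd (z (Suc k)) $ r - snd (z k) $ r))^2"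
  have a0: "0 \<le> a" and b0: "0 \<le> b" unfolding a_def b_def by auto
  have l: "rminus < lam k r" "lam k r < rplus" and m: "rminus < mu k r" "mu k r < rplus"
    using lam_bnd mu_bnd by auto
  have 1: "L (Mid k r) + ereal (a / (2 * lam k r)) \<le> L (Bpt k r)"
    using PU[of k r "fst (z k) $ r"] unfolding a_def Bpt_def by simp
  have 2: "L (Apt k r) + ereal (b / (2 * mu k r)) \<le> L (Mid k r)"
    using PV[of k r "snd (z k) $ r"] unfolding b_def Mid_Pv by simp
  have ha: "a / (2 * rplus) \<le> a / (2 * lam k r)"
    using a0 l r_pos by (intro divide_left_mono) auto
  have hb: "b / (2 * rplus) \<le> b / (2 * mu k r)"
    using b0 m r_pos by (intro divide_left_mono) auto
  have "L (Mid k r) + ereal (a / (2 * rplus)) \<le> L (Mid k r) + ereal (a / (2 * lam k r))"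
    using ha by (intro add_left_mono) simp
  with 1 show 3: "L (Mid k r) + ereal (a / (2 * rplus)) \<le> L (Bpt k r)" by simp
  show "L (Mid k r) \<le> L (Bpt k r)"
  proof -
    have "0 \<le> a / (2 * rplus)" using a0 r_pos r_lt by simp
    then have "L (Mid k r) \<le> L (Mid k r) + ereal (a / (2 * rplus))"
      using add_increasing2[of "ereal (a / (2 * rplus))" "L (Mid k r)" "L (Mid k r)"] by simp
    with 3 show ?thesis by simp
  qed
  have "L (Apt k r) + ereal (cc k r) = (L (Apt k r) + ereal (b / (2 * rplus))) + ereal (a / (2 * rplus))"
    unfolding cc_def a_def b_def add_divide_distrib plus_ereal.simps(1)[symmetric] by (simp only: ac_simps)
  also have "\<dots> \<le> L (Mid k r) + ereal (a / (2 * rplus))"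
    using 2 hb by (intro add_right_mono order_trans[OF _ 2] add_left_mono) auto
  also have "\<dots> \<le> L (Bpt k r)" using 3 .
  finally show "L (Apt k r) + ereal (cc k r) \<le> L (Bpt k r)" .
qed

end

lemma mix_max: "mix new old (Max (UNIV::'r::{finite,linorder} set)) (new $ Max UNIV) = new"
proof -
  have h: "\<not> s < Max UNIV \<Longrightarrow> s = Max UNIV" for s :: 'r
  proof -
    assume a: "\<not> s < Max UNIV"
    have b: "s \<le> Max UNIV" by (rule Max_ge) simp_all
    from a b show "s = Max UNIV" by (simp only: not_less antisym)
  qed
  show ?thesis unfolding vec_eq_iff mix_nth
  proof (intro allI)
    fix i show "(if i < Max UNIV then new $ i else if i = Max UNIV then new $ Max UNIV else old $ i) = new $ i"
      using h[of i] by (cases "i < Max UNIV") auto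
  qed
qed

lemma mix_pred: assumes pr: "p < r" and iff: "\<And>s. s < r \<longleftrightarrow> s \<le> p"
  shows "mix new old r (old $ r) = mix new old p (new $ p)"
    unfolding vec_eq_iff mix_nth
  proof (intro allI)
    fix i show "(if i < r then new $ i else if i = r then old $ r else old $ i) =
          (if i < p then new $ i else if i = p then new $ p else old $ i)"
      using iff[of i] pr by (cases "i < p"; cases "i = p"; cases "i < r") auto
  qed

context pam begin

lemma Bpt_min: "{s. s < r} = {} \<Longrightarrow> Bpt k r = z k"
  unfolding Bpt_def Pu_def by (auto simp: prod_eq_iff vec_eq_iff mix_nth)

lemma Bpt_pred: assumes "{s. s < r} \<noteq> {}" shows "Bpt k r = Apt k (Max {s. s < r})"
proof -
  obtain p where p: "p = Max {s. s < r}" by simp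
  have pr: "p < r" using assms Max_in[of "{s. s < r}"] p by auto
  have iff: "s < r \<longleftrightarrow> s \<le> p" for s
    using pr p by (auto intro: Max_ge)
  show ?thesis unfolding Bpt_def Apt_def Pu_def Pv_def p[symmetric] by (simp add: mix_pred[OF pr iff])
qed

lemma Apt_max: "Apt k (Max UNIV) = z (Suc k)"
  unfolding Apt_def Pv_def mix_max by simp

lemma descent_aux: "card {s. s < r} = n \<Longrightarrow> L (Bpt k r) + ereal (\<Sum>s\<in>{s. s < r}. cc k s) \<le> L (z k)"
proof (induction n arbitrary: r)
  case 0
  then have "{s. s < r} = {}" by simp
  then show ?case using Bpt_min[of r k] by simp
next
  case (Suc n)
  have ne: "{s. s < r} \<noteq> {}"
  proof
    assume "{s. s < r} = {}"
    then have "card {s. s < r} = 0" by simp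
    with Suc.prems show False by simp
  qed
  obtain p where p: "p = Max {s. s < r}" by simp
  have pr: "p < r" using ne Max_in[of "{s. s < r}"] p by auto
  have le: "s < r \<Longrightarrow> s \<le> p" for s using p by (auto intro: Max_ge)
  have eq: "{s. s < r} = insert p {s. s < p}"
  proof (intro set_eqI iffI)
    fix s assume "s \<in> {s. s < r}" then show "s \<in> insert p {s. s < p}" using le[of s] by auto
  next
    fix s assume "s \<in> insert p {s. s < p}" then show "s \<in> {s. s < r}" using pr by auto
  qed
  have pn: "p \<notin> {s. s < p}" by simp
  have "card {s. s < p} = n" using Suc.prems unfolding eq using pn by simp
  then have IH: "L (Bpt k p) + ereal (\<Sum>s\<in>{s. s < p}. cc k s) \<le> L (z k)" by (rule Suc.IH)
  have "L (Bpt k r) + ereal (\<Sum>s\<in>{s. s < r}. cc k s)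
      = (L (Apt k p) + ereal (cc k p)) + ereal (\<Sum>s\<in>{s. s < p}. cc k s)"
    unfolding Bpt_pred[OF ne] unfolding p[symmetric] unfolding eq by (simp add: sum.insert[OF _ pn] add.assoc)
  also have "\<dots> \<le> L (Bpt k p) + ereal (\<Sum>s\<in>{s. s < p}. cc k s)"
    by (intro add_right_mono block_step)
  finally show ?case using IH by simp
qed

lemma descent_Bpt: "L (Bpt k r) \<le> L (z k)"
proof -
  have "0 \<le> (\<Sum>s\<in>{s. s < r}. cc k s)" by (intro sum_nonneg cc_nonneg)
  then have "L (Bpt k r) \<le> L (Bpt k r) + ereal (\<Sum>s\<in>{s. s < r}. cc k s)"
    using add_increasing2[of "ereal (\<Sum>s\<in>{s. s < r}. cc k s)" "L (Bpt k r)" "L (Bpt k r)"] by simp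
  then show ?thesis using descent_aux[OF refl, where r=r and k=k] by simp
qed

lemma descent_Mid: "L (Mid k r) \<le> L (z k)"
  using block_step2 descent_Bpt order_trans by blast

lemma sum_cc: "(\<Sum>s\<in>UNIV. cc k s) = (norm (z (Suc k) - z k))^2 / (2 * rplus)"
proof -
  have "(norm (z (Suc k) - z k))^2 = (\<Sum>s\<in>UNIV. (norm (fst (z (Suc k)) $ s - fst (z k) $ s))^2)
     + (\<Sum>s\<in>UNIV. (norm (snd (z (Suc k)) $ s - snd (z k) $ s))^2)"
    using normsq_pt[of "z (Suc k) - z k"] by (simp only: fst_diff snd_diff vector_minus_component)
  moreover have "(\<Sum>s\<in>UNIV. cc k s) = (\<Sum>s\<in>UNIV. (norm (fst (z (Suc k)) $ s - fst (z k) $ s))^2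
     + (norm (snd (z (Suc k)) $ s - snd (z k) $ s))^2) / (2 * rplus)"
    unfolding cc_def by (simp only: sum_divide_distrib)
  ultimately show ?thesis by (simp only: sum.distrib)
qed

lemma descent: "L (z (Suc k)) + ereal ((norm (z (Suc k) - z k))^2 / (2 * rplus)) \<le> L (z k)"
proof -
  define m where "m = Max (UNIV :: 'r set)"
  have eq: "(UNIV :: 'r set) = insert m {s. s < m}"
    unfolding m_def using Max_ge[of "UNIV::'r set"] by (auto simp: less_le)
  have pn: "m \<notin> {s. s < m}" by simp
  have s: "(\<Sum>s\<in>UNIV. cc k s) = cc k m + (\<Sum>s\<in>{s. s < m}. cc k s)"
    by (subst eq) (simp add: sum.insert[OF _ pn])
  have "L (z (Suc k)) + ereal ((norm (z (Suc k) - z k))^2 / (2 * rplus))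
       = (L (Apt k m) + ereal (cc k m)) + ereal (\<Sum>s\<in>{s. s < m}. cc k s)"
    unfolding sum_cc[symmetric] s m_def Apt_max by (simp add: add.assoc)
  also have "\<dots> \<le> L (Bpt k m) + ereal (\<Sum>s\<in>{s. s < m}. cc k s)"
    by (intro add_right_mono block_step)
  also have "\<dots> \<le> L (z k)" by (rule descent_aux[OF refl])
  finally show ?thesis .
qed

end

lemma frechet_of_min:
  fixes F :: "'a::real_inner \<Rightarrow> ereal" and h :: "'a \<Rightarrow> real"
  assumes min: "\<And>x. F x0 + R + ereal (h x0) \<le> F x + R + ereal (h x)"
    and R: "\<bar>R\<bar> \<noteq> \<infinity>" and F0: "\<bar>F x0\<bar> \<noteq> \<infinity>"
    and dh: "(h has_derivative (\<lambda>y. inner G y)) (at x0)"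
  shows "- G \<in> frechet_subdiff F x0"
proof -
  obtain r0 where r0: "R = ereal r0" using R by (cases R) auto
  obtain a where a: "F x0 = ereal a" using F0 by (cases "F x0") auto
  have "\<exists>d>0. \<forall>y. norm (y - x0) < d \<longrightarrow> F y \<ge> F x0 + ereal (inner (-G) (y - x0) - e * norm (y - x0))"
    if e: "e > 0" for e :: real
  proof -
    from dh[unfolded has_derivative_at_alt] e obtain d where d: "d > 0" and
      hd: "\<And>y. norm (y - x0) < d \<Longrightarrow> norm (h y - h x0 - inner G (y - x0)) \<le> e * norm (y - x0)" by blast
    have "\<forall>y. norm (y - x0) < d \<longrightarrow> F y \<ge> F x0 + ereal (inner (-G) (y - x0) - e * norm (y - x0))"
    proof (intro allI impI)
      fix y assume y: "norm (y - x0) < d"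
      have hb: "h x0 - h y \<ge> inner (-G) (y - x0) - e * norm (y - x0)"
        using hd[OF y] by (simp add: inner_minus_left abs_le_iff)
      show "F y \<ge> F x0 + ereal (inner (-G) (y - x0) - e * norm (y - x0))"
      proof (cases "F y")
        case (real b)
        with min[of y] a r0 have "a + r0 + h x0 \<le> b + r0 + h y" by simp
        then show ?thesis using hb a real by simp
      next
        case PInf then show ?thesis by simp
      next
        case MInf with min[of y] a r0 show ?thesis by simp
      qed
    qed
    with d show ?thesis by blast
  qed
  then show ?thesis unfolding frechet_subdiff_def using F0 by blast
qed

lemma frechet_Lfun:
  fixes f :: "'r::finite \<Rightarrow> real^'n1::finite \<Rightarrow> ereal" and g :: "'r \<Rightarrow> real^'n2::finite \<Rightarrow> ereal"
    and Q :: "('n1,'n2,'r) pt \<Rightarrow> real" and x :: "('n1,'n2,'r) pt"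
  assumes a: "\<And>r. a r \<in> frechet_subdiff (f r) (fst x $ r)"
    and b: "\<And>r. b r \<in> frechet_subdiff (g r) (snd x $ r)"
    and dQ: "(Q has_derivative (\<lambda>h. inner G h)) (at x)"
  shows "((\<chi> r. a r, \<chi> r. b r) + G) \<in> frechet_subdiff (Lfun f Q g) x"
proof -
  define fv where "fv r = real_of_ereal (f r (fst x $ r))" for r
  define gv where "gv r = real_of_ereal (g r (snd x $ r))" for r
  have fv: "f r (fst x $ r) = ereal (fv r)" for r
    using a[of r] unfolding frechet_subdiff_def fv_def by (cases "f r (fst x $ r)") auto
  have gv: "g r (snd x $ r) = ereal (gv r)" for r
    using b[of r] unfolding frechet_subdiff_def gv_def by (cases "g r (snd x $ r)") auto
  have Lx: "Lfun f Q g x = ereal ((\<Sum>r\<in>UNIV. fv r) + Q x + (\<Sum>r\<in>UNIV. gv r))"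
    unfolding Lfun_def fv gv by simp
  define w where "w = (\<chi> r. a r, \<chi> r. b r) + G"
  have main: "\<exists>d>0. \<forall>y. norm (y - x) < d \<longrightarrow>
      Lfun f Q g y \<ge> Lfun f Q g x + ereal (inner w (y - x) - e * norm (y - x))"
    if e: "e > 0" for e :: real
  proof -
    define n where "n = 2 * real CARD('r) + 1"
    have n: "n > 0" unfolding n_def by simp
    define e' where "e' = e / n"
    have e': "e' > 0" unfolding e'_def using e n by simp
    have ev1: "eventually (\<lambda>y. f r (fst y $ r) \<ge> f r (fst x $ r)
        + ereal (inner (a r) (fst y $ r - fst x $ r) - e' * norm (fst y $ r - fst x $ r))) (nhds x)" for r
    proof -
      obtain d where d: "d > 0" and hd: "\<forall>u. norm (u - fst x $ r) < d \<longrightarrow> f r u \<ge> f r (fst x $ r)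
        + ereal (inner (a r) (u - fst x $ r) - e' * norm (u - fst x $ r))"
        using a[of r] e' unfolding frechet_subdiff_def by blast
      show ?thesis unfolding eventually_nhds_metric
      proof (intro exI conjI allI impI)
        show "d > 0" by fact
        fix y assume "dist y x < d"
        then have "norm (fst y $ r - fst x $ r) < d"
          using norm_block_fst[of "y - x" r] by (simp add: dist_norm)
        then show "f r (fst y $ r) \<ge> f r (fst x $ r)
          + ereal (inner (a r) (fst y $ r - fst x $ r) - e' * norm (fst y $ r - fst x $ r))"
          using hd by blast
      qed
    qed
    have ev2: "eventually (\<lambda>y. g r (snd y $ r) \<ge> g r (snd x $ r)
        + ereal (inner (b r) (snd y $ r - snd x $ r) - e' * norm (snd y $ r - snd x $ r))) (nhds x)" for r
    proof -
      obtain d where d: "d > 0" and hd: "\<forall>u. norm (u - snd x $ r) < d \<longrightarrow> g r u \<ge> g r (snd x $ r)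
        + ereal (inner (b r) (u - snd x $ r) - e' * norm (u - snd x $ r))"
        using b[of r] e' unfolding frechet_subdiff_def by blast
      show ?thesis unfolding eventually_nhds_metric
      proof (intro exI conjI allI impI)
        show "d > 0" by fact
        fix y assume "dist y x < d"
        then have "norm (snd y $ r - snd x $ r) < d"
          using norm_block_snd[of "y - x" r] by (simp add: dist_norm)
        then show "g r (snd y $ r) \<ge> g r (snd x $ r)
          + ereal (inner (b r) (snd y $ r - snd x $ r) - e' * norm (snd y $ r - snd x $ r))"
          using hd by blast
      qed
    qed
    have ev3: "eventually (\<lambda>y. Q y \<ge> Q x + inner G (y - x) - e' * norm (y - x)) (nhds x)"
    proof -
      obtain d where d: "d > 0" and hd: "\<And>y. norm (y - x) < d \<Longrightarrow> norm (Q y - Q x - inner G (y - x)) \<le> e' * norm (y - x)"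
        using dQ[unfolded has_derivative_at_alt] e' by blast
      show ?thesis unfolding eventually_nhds_metric
      proof (intro exI conjI allI impI)
        show "d > 0" by fact
        fix y assume "dist y x < d"
        then have "norm (Q y - Q x - inner G (y - x)) \<le> e' * norm (y - x)" using hd by (simp add: dist_norm)
        then show "Q y \<ge> Q x + inner G (y - x) - e' * norm (y - x)" by (simp add: abs_le_iff)
      qed
    qed
    have "eventually (\<lambda>y. (\<forall>r. f r (fst y $ r) \<ge> f r (fst x $ r)
        + ereal (inner (a r) (fst y $ r - fst x $ r) - e' * norm (fst y $ r - fst x $ r)))
       \<and> (\<forall>r. g r (snd y $ r) \<ge> g r (snd x $ r)
        + ereal (inner (b r) (snd y $ r - snd x $ r) - e' * norm (snd y $ r - snd x $ r)))
       \<and> Q y \<ge> Q x + inner G (y - x) - e' * norm (y - x)) (nhds x)"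
      using eventually_all_finite[OF ev1] eventually_all_finite[OF ev2] ev3 by (intro eventually_conj)
    then obtain d where d: "d > 0" and hd: "\<And>y. dist y x < d \<Longrightarrow> (\<forall>r. f r (fst y $ r) \<ge> f r (fst x $ r)
        + ereal (inner (a r) (fst y $ r - fst x $ r) - e' * norm (fst y $ r - fst x $ r)))
       \<and> (\<forall>r. g r (snd y $ r) \<ge> g r (snd x $ r)
        + ereal (inner (b r) (snd y $ r - snd x $ r) - e' * norm (snd y $ r - snd x $ r)))
       \<and> Q y \<ge> Q x + inner G (y - x) - e' * norm (y - x)"
      unfolding eventually_nhds_metric by blast
    have "\<forall>y. norm (y - x) < d \<longrightarrow> Lfun f Q g y \<ge> Lfun f Q g x + ereal (inner w (y - x) - e * norm (y - x))"
    proof (intro allI impI)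
      fix y assume y: "norm (y - x) < d"
      define A where "A r = inner (a r) (fst y $ r - fst x $ r) - e' * norm (fst y $ r - fst x $ r)" for r
      define B where "B r = inner (b r) (snd y $ r - snd x $ r) - e' * norm (snd y $ r - snd x $ r)" for r
      have h1: "f r (fst y $ r) \<ge> ereal (fv r + A r)" and h2: "g r (snd y $ r) \<ge> ereal (gv r + B r)"
        and h3: "Q y \<ge> Q x + inner G (y - x) - e' * norm (y - x)" for r
        using hd[of y] y unfolding A_def B_def fv gv by (auto simp: dist_norm)
      have s1: "(\<Sum>r\<in>UNIV. f r (fst y $ r)) \<ge> ereal (\<Sum>r\<in>UNIV. fv r + A r)"
        unfolding sum_ereal[symmetric] by (intro sum_mono h1)
      have s2: "(\<Sum>r\<in>UNIV. g r (snd y $ r)) \<ge> ereal (\<Sum>r\<in>UNIV. gv r + B r)"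
        unfolding sum_ereal[symmetric] by (intro sum_mono h2)
      have "Lfun f Q g y \<ge> ereal (\<Sum>r\<in>UNIV. fv r + A r) + ereal (Q y) + ereal (\<Sum>r\<in>UNIV. gv r + B r)"
        unfolding Lfun_def by (intro add_mono s1 s2 order_refl)
      then have L1: "Lfun f Q g y \<ge> ereal ((\<Sum>r\<in>UNIV. fv r) + (\<Sum>r\<in>UNIV. A r) + Q y + (\<Sum>r\<in>UNIV. gv r) + (\<Sum>r\<in>UNIV. B r))"
        by (simp add: sum.distrib add_ac)
      have nA: "(\<Sum>r\<in>UNIV. norm (fst y $ r - fst x $ r)) \<le> real CARD('r) * norm (y - x)"
        using sum_bounded_above[of UNIV "\<lambda>r. norm (fst y $ r - fst x $ r)" "norm (y - x)"]
          norm_block_fst[of "y - x"] by simp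
      have nB: "(\<Sum>r\<in>UNIV. norm (snd y $ r - snd x $ r)) \<le> real CARD('r) * norm (y - x)"
        using sum_bounded_above[of UNIV "\<lambda>r. norm (snd y $ r - snd x $ r)" "norm (y - x)"]
          norm_block_snd[of "y - x"] by simp
      have iw: "inner w (y - x) = (\<Sum>r\<in>UNIV. inner (a r) (fst y $ r - fst x $ r))
          + (\<Sum>r\<in>UNIV. inner (b r) (snd y $ r - snd x $ r)) + inner G (y - x)"
      proof -
        obtain y1 y2 where yy: "y = (y1, y2)" by force
        obtain x1 x2 where xx: "x = (x1, x2)" by force
        show ?thesis unfolding w_def inner_add_left yy xx by (simp add: inner_vec_def)
      qed
      have sA: "(\<Sum>r\<in>UNIV. A r) = (\<Sum>r\<in>UNIV. inner (a r) (fst y $ r - fst x $ r)) - e' * (\<Sum>r\<in>UNIV. norm (fst y $ r - fst x $ r))"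
        unfolding A_def by (simp add: sum_subtractf sum_distrib_left)
      have sB: "(\<Sum>r\<in>UNIV. B r) = (\<Sum>r\<in>UNIV. inner (b r) (snd y $ r - snd x $ r)) - e' * (\<Sum>r\<in>UNIV. norm (snd y $ r - snd x $ r))"
        unfolding B_def by (simp add: sum_subtractf sum_distrib_left)
      have en: "e' * n = e" unfolding e'_def using n by simp
      have "e' * (\<Sum>r\<in>UNIV. norm (fst y $ r - fst x $ r)) + e' * (\<Sum>r\<in>UNIV. norm (snd y $ r - snd x $ r)) + e' * norm (y - x)
          \<le> e' * (real CARD('r) * norm (y - x)) + e' * (real CARD('r) * norm (y - x)) + e' * norm (y - x)"
        using nA nB e' by (intro add_mono mult_left_mono) auto
      also have "\<dots> = e * norm (y - x)" unfolding en[symmetric] n_def by (simp add: algebra_simps)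
      finally have err: "e' * (\<Sum>r\<in>UNIV. norm (fst y $ r - fst x $ r)) + e' * (\<Sum>r\<in>UNIV. norm (snd y $ r - snd x $ r)) + e' * norm (y - x)
          \<le> e * norm (y - x)" .
      have "(\<Sum>r\<in>UNIV. fv r) + Q x + (\<Sum>r\<in>UNIV. gv r) + (inner w (y - x) - e * norm (y - x))
         \<le> (\<Sum>r\<in>UNIV. fv r) + (\<Sum>r\<in>UNIV. A r) + Q y + (\<Sum>r\<in>UNIV. gv r) + (\<Sum>r\<in>UNIV. B r)"
        using h3 err unfolding iw sA sB by linarith
      then have E: "ereal ((\<Sum>r\<in>UNIV. fv r) + Q x + (\<Sum>r\<in>UNIV. gv r) + (inner w (y - x) - e * norm (y - x)))
         \<le> ereal ((\<Sum>r\<in>UNIV. fv r) + (\<Sum>r\<in>UNIV. A r) + Q y + (\<Sum>r\<in>UNIV. gv r) + (\<Sum>r\<in>UNIV. B r))"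
        by (simp only: ereal_less_eq)
      have eqx: "Lfun f Q g x + ereal (inner w (y - x) - e * norm (y - x)) =
          ereal ((\<Sum>r\<in>UNIV. fv r) + Q x + (\<Sum>r\<in>UNIV. gv r) + (inner w (y - x) - e * norm (y - x)))"
        unfolding Lx by simp
      show "Lfun f Q g y \<ge> Lfun f Q g x + ereal (inner w (y - x) - e * norm (y - x))"
        unfolding eqx using order_trans[OF E L1] .
    qed
    with d show ?thesis by blast
  qed
  show ?thesis unfolding w_def[symmetric] frechet_subdiff_def using main Lx by auto
qed

definition emb :: "'r::finite \<Rightarrow> 'b::real_normed_vector \<Rightarrow> ('b, 'r) vec" where
  "emb r h = (\<chi> s. if s = r then h else 0)"

lemma norm_emb: "norm (emb r h) = norm h"
proof -
  have "(norm (emb r h))^2 = (norm h)^2"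
    unfolding normsq_vec emb_def by (simp add: if_distrib[of "\<lambda>x. (norm x)^2"] cong: if_cong)
  then show ?thesis by (simp add: power2_eq_iff_nonneg)
qed

lemma bounded_linear_emb: "bounded_linear (emb r)"
proof (rule bounded_linear_intro[where K=1])
  show "emb r (x + y) = emb r x + emb r y" for x y unfolding emb_def by (simp add: vec_eq_iff)
  show "emb r (c *\<^sub>R x) = c *\<^sub>R emb r x" for c x unfolding emb_def by (simp add: vec_eq_iff)
  show "norm (emb r x) \<le> norm x * 1" for x by (simp add: norm_emb)
qed

lemma mix_emb: "mix new old r x = mix new old r 0 + emb r x"
  unfolding mix_def emb_def by (simp add: vec_eq_iff)

lemma hasd_mix: "((\<lambda>x. mix new old r x) has_derivative emb r) (at x0)"
proof -
  have "((\<lambda>x. mix new old r 0 + emb r x) has_derivative (\<lambda>x. 0 + emb r x)) (at x0)"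
    by (intro has_derivative_add has_derivative_const bounded_linear.has_derivative[OF bounded_linear_emb] has_derivative_ident)
  then show ?thesis by (subst mix_emb) simp
qed

lemma inner_emb: "inner a (emb r h) = inner (a $ r) h"
  unfolding emb_def inner_vec_def by (simp add: if_distrib[of "inner _"] cong: if_cong)

lemma hasd_sq: "((\<lambda>x. (norm (x - c))^2 / (2 * l)) has_derivative (\<lambda>h. inner ((1 / l) *\<^sub>R (x0 - c)) h)) (at x0)"
  if "l \<noteq> 0" for c :: "'a::real_inner"
proof -
  have d: "((\<lambda>x. x - c) has_derivative (\<lambda>h. h - 0)) (at x0)"
    by (intro has_derivative_diff has_derivative_ident has_derivative_const)
  have A: "((\<lambda>x. inner (x - c) (x - c)) has_derivative (\<lambda>h. inner (x0 - c) (h - 0) + inner (h - 0) (x0 - c))) (at x0)"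
    by (rule has_derivative_inner[OF d d])
  have B: "((\<lambda>x. 1 / (2 * l) * inner (x - c) (x - c)) has_derivative
      (\<lambda>h. 1 / (2 * l) * (inner (x0 - c) (h - 0) + inner (h - 0) (x0 - c)))) (at x0)"
    by (rule bounded_linear.has_derivative[OF bounded_linear_mult_right A])
  have e1: "(\<lambda>x. 1 / (2 * l) * inner (x - c) (x - c)) = (\<lambda>x. (norm (x - c))^2 / (2 * l))"
    by (auto simp: power2_norm_eq_inner)
  have e2: "(\<lambda>h. 1 / (2 * l) * (inner (x0 - c) (h - 0) + inner (h - 0) (x0 - c))) = (\<lambda>h. inner ((1 / l) *\<^sub>R (x0 - c)) h)"
  proof (rule ext)
    fix h
    have gen: "1 / (2 * l) * (inner a (h - 0) + inner (h - 0) a) = inner ((1 / l) *\<^sub>R a) h" for a :: 'a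
      using that by (simp add: inner_commute[of h a] field_simps)
    show "1 / (2 * l) * (inner (x0 - c) (h - 0) + inner (h - 0) (x0 - c)) = inner ((1 / l) *\<^sub>R (x0 - c)) h"
      by (rule gen)
  qed
  show ?thesis using B unfolding e1 e2 .
qed

context pam begin

lemma L_lower: "\<exists>m. \<forall>x. ereal m \<le> L x" by (rule L_bdd)

lemma f_noninf: "f r x \<noteq> -\<infinity>" using f_proper[of r] unfolding proper_fun_def by blast
lemma g_noninf: "g r x \<noteq> -\<infinity>" using g_proper[of r] unfolding proper_fun_def by blast

definition "RestU k r = (\<Sum>s\<in>UNIV - {r}. f s (fst (Mid k r) $ s)) + (\<Sum>s\<in>UNIV. g s (snd (Mid k r) $ s))"
definition "RestV k r = (\<Sum>s\<in>UNIV. f s (fst (Apt k r) $ s)) + (\<Sum>s\<in>UNIV - {r}. g s (snd (Apt k r) $ s))"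

lemma L_Pu: "L (Pu k r x) = f r x + RestU k r + ereal (Q (Pu k r x))"
proof -
  have 1: "(\<Sum>s\<in>UNIV. f s (fst (Pu k r x) $ s)) = f r x + (\<Sum>s\<in>UNIV - {r}. f s (fst (Mid k r) $ s))"
  proof -
    have "(\<Sum>s\<in>UNIV. f s (fst (Pu k r x) $ s)) = f r (fst (Pu k r x) $ r) + (\<Sum>s\<in>UNIV - {r}. f s (fst (Pu k r x) $ s))"
      by (rule sum.remove) auto
    also have "(\<Sum>s\<in>UNIV - {r}. f s (fst (Pu k r x) $ s)) = (\<Sum>s\<in>UNIV - {r}. f s (fst (Mid k r) $ s))"
      by (rule sum.cong) (auto simp: Pu_def Mid_def mix_nth)
    finally show ?thesis by (simp add: Pu_def mix_nth)
  qed
  have 2: "snd (Pu k r x) = snd (Mid k r)" by (simp add: Pu_def Mid_def)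
  show ?thesis unfolding L_def Lfun_def 1 2 RestU_def by (simp add: ac_simps)
qed

lemma L_Pv: "L (Pv k r y) = g r y + RestV k r + ereal (Q (Pv k r y))"
proof -
  have 1: "(\<Sum>s\<in>UNIV. g s (snd (Pv k r y) $ s)) = g r y + (\<Sum>s\<in>UNIV - {r}. g s (snd (Apt k r) $ s))"
  proof -
    have "(\<Sum>s\<in>UNIV. g s (snd (Pv k r y) $ s)) = g r (snd (Pv k r y) $ r) + (\<Sum>s\<in>UNIV - {r}. g s (snd (Pv k r y) $ s))"
      by (rule sum.remove) auto
    also have "(\<Sum>s\<in>UNIV - {r}. g s (snd (Pv k r y) $ s)) = (\<Sum>s\<in>UNIV - {r}. g s (snd (Apt k r) $ s))"
      by (rule sum.cong) (auto simp: Pv_def Apt_def mix_nth)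
    finally show ?thesis by (simp add: Pv_def mix_nth)
  qed
  have 2: "fst (Pv k r y) = fst (Apt k r)" by (simp add: Pv_def Apt_def)
  show ?thesis unfolding L_def Lfun_def 1 2 RestV_def by (simp add: ac_simps)
qed

lemma L_fin_le: assumes "L p \<le> L (z k)" shows "\<bar>L p\<bar> \<noteq> \<infinity>"
proof -
  obtain m where m: "\<forall>x. ereal m \<le> L x" using L_bdd by blast
  have "L p \<noteq> -\<infinity>" using m[rule_format, of p] by auto
  moreover have "L p \<noteq> \<infinity>" using assms l_fin[of k] by auto
  ultimately show ?thesis by auto
qed

lemma sum_noninf: "(\<And>s. s \<in> A \<Longrightarrow> F s \<noteq> -\<infinity>) \<Longrightarrow> (\<Sum>s\<in>A. F s :: ereal) \<noteq> -\<infinity>"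
  by (induction A rule: infinite_finite_induct) auto

lemma fin_split: fixes a b :: ereal
  assumes "\<bar>a + b + ereal c\<bar> \<noteq> \<infinity>" "a \<noteq> -\<infinity>" "b \<noteq> -\<infinity>"
  shows "\<bar>a\<bar> \<noteq> \<infinity>" "\<bar>b\<bar> \<noteq> \<infinity>"
  using assms by (cases a; cases b; simp)+

lemma RestU_fin: "\<bar>RestU k r\<bar> \<noteq> \<infinity>" and fU_fin: "\<bar>f r (fst (z (Suc k)) $ r)\<bar> \<noteq> \<infinity>"
proof -
  have "\<bar>L (Mid k r)\<bar> \<noteq> \<infinity>" by (rule L_fin_le[OF descent_Mid])
  then have *: "\<bar>f r (fst (z (Suc k)) $ r) + RestU k r + ereal (Q (Mid k r))\<bar> \<noteq> \<infinity>"
    unfolding Mid_def L_Pu .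
  have nr: "RestU k r \<noteq> -\<infinity>" unfolding RestU_def
    using sum_noninf[of "UNIV - {r}" "\<lambda>s. f s (fst (Mid k r) $ s)"] sum_noninf[of UNIV "\<lambda>s. g s (snd (Mid k r) $ s)"]
      f_noninf g_noninf by (simp add: ereal_plus_eq_MInfty)
  show "\<bar>RestU k r\<bar> \<noteq> \<infinity>" "\<bar>f r (fst (z (Suc k)) $ r)\<bar> \<noteq> \<infinity>"
    using fin_split[OF * f_noninf nr] by auto
qed

lemma descent_Apt: "L (Apt k r) \<le> L (z k)"
proof -
  have "L (Apt k r) \<le> L (Apt k r) + ereal (cc k r)"
    using add_increasing2[of "ereal (cc k r)" "L (Apt k r)" "L (Apt k r)"] cc_nonneg by simp
  also have "\<dots> \<le> L (Bpt k r)" by (rule block_step)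
  also have "\<dots> \<le> L (z k)" by (rule descent_Bpt)
  finally show ?thesis .
qed

lemma RestV_fin: "\<bar>RestV k r\<bar> \<noteq> \<infinity>" and gV_fin: "\<bar>g r (snd (z (Suc k)) $ r)\<bar> \<noteq> \<infinity>"
proof -
  have "\<bar>L (Apt k r)\<bar> \<noteq> \<infinity>" by (rule L_fin_le[OF descent_Apt])
  then have *: "\<bar>g r (snd (z (Suc k)) $ r) + RestV k r + ereal (Q (Apt k r))\<bar> \<noteq> \<infinity>"
    unfolding Apt_def L_Pv .
  have nr: "RestV k r \<noteq> -\<infinity>" unfolding RestV_def
    using sum_noninf[of UNIV "\<lambda>s. f s (fst (Apt k r) $ s)"] sum_noninf[of "UNIV - {r}" "\<lambda>s. g s (snd (Apt k r) $ s)"]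
      f_noninf g_noninf by (simp add: ereal_plus_eq_MInfty)
  show "\<bar>RestV k r\<bar> \<noteq> \<infinity>" "\<bar>g r (snd (z (Suc k)) $ r)\<bar> \<noteq> \<infinity>"
    using fin_split[OF * g_noninf nr] by auto
qed

definition "GU k r = fst (gradQ (Mid k r)) $ r + (1 / lam k r) *\<^sub>R (fst (z (Suc k)) $ r - fst (z k) $ r)"
definition "GV k r = snd (gradQ (Apt k r)) $ r + (1 / mu k r) *\<^sub>R (snd (z (Suc k)) $ r - snd (z k) $ r)"

lemma subU: "- GU k r \<in> frechet_subdiff (f r) (fst (z (Suc k)) $ r)"
proof (rule frechet_of_min[where R = "RestU k r" and h = "\<lambda>x. Q (Pu k r x) + (norm (x - fst (z k) $ r))^2 / (2 * lam k r)"])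
  have l0: "lam k r \<noteq> 0" using lam_bnd[of k r] r_pos by auto
  fix x
  show "f r (fst (z (Suc k)) $ r) + RestU k r + ereal (Q (Pu k r (fst (z (Suc k)) $ r)) + (norm (fst (z (Suc k)) $ r - fst (z k) $ r))^2 / (2 * lam k r))
     \<le> f r x + RestU k r + ereal (Q (Pu k r x) + (norm (x - fst (z k) $ r))^2 / (2 * lam k r))"
    using PU[of k r x] unfolding Mid_def L_Pu by (simp add: add.assoc)
next
  show "\<bar>RestU k r\<bar> \<noteq> \<infinity>" by (rule RestU_fin)
  show "\<bar>f r (fst (z (Suc k)) $ r)\<bar> \<noteq> \<infinity>" by (rule fU_fin)
  have l0: "lam k r \<noteq> 0" using lam_bnd[of k r] r_pos by auto
  have d1: "((\<lambda>x. Q (Pu k r x)) has_derivative (\<lambda>h. inner (gradQ (Mid k r)) (emb r h, 0))) (at (fst (z (Suc k)) $ r))"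
  proof -
    have "(Pu k r has_derivative (\<lambda>h. (emb r h, 0))) (at (fst (z (Suc k)) $ r))"
      unfolding Pu_def[abs_def] by (intro has_derivative_Pair hasd_mix has_derivative_const)
    from has_derivative_compose[OF this Q_grad] show ?thesis unfolding Mid_def by simp
  qed
  have d2: "(\<lambda>h. inner (gradQ (Mid k r)) (emb r h, 0)) = (\<lambda>h. inner (fst (gradQ (Mid k r)) $ r) h)"
    by (auto simp: inner_Pair_0 inner_emb)
  show "((\<lambda>x. Q (Pu k r x) + (norm (x - fst (z k) $ r))^2 / (2 * lam k r)) has_derivative (\<lambda>y. inner (GU k r) y))
     (at (fst (z (Suc k)) $ r))"
    using has_derivative_add[OF d1[unfolded d2] hasd_sq[OF l0, of "fst (z k) $ r" "fst (z (Suc k)) $ r"]]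
    unfolding GU_def by (simp add: inner_add_left)
qed

lemma subV: "- GV k r \<in> frechet_subdiff (g r) (snd (z (Suc k)) $ r)"
proof (rule frechet_of_min[where R = "RestV k r" and h = "\<lambda>y. Q (Pv k r y) + (norm (y - snd (z k) $ r))^2 / (2 * mu k r)"])
  fix y
  show "g r (snd (z (Suc k)) $ r) + RestV k r + ereal (Q (Pv k r (snd (z (Suc k)) $ r)) + (norm (snd (z (Suc k)) $ r - snd (z k) $ r))^2 / (2 * mu k r))
     \<le> g r y + RestV k r + ereal (Q (Pv k r y) + (norm (y - snd (z k) $ r))^2 / (2 * mu k r))"
    using PV[of k r y] unfolding Apt_def L_Pv by (simp add: add.assoc)
next
  show "\<bar>RestV k r\<bar> \<noteq> \<infinity>" by (rule RestV_fin)
  show "\<bar>g r (snd (z (Suc k)) $ r)\<bar> \<noteq> \<infinity>" by (rule gV_fin)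
  have l0: "mu k r \<noteq> 0" using mu_bnd[of k r] r_pos by auto
  have d1: "((\<lambda>y. Q (Pv k r y)) has_derivative (\<lambda>h. inner (gradQ (Apt k r)) (0, emb r h))) (at (snd (z (Suc k)) $ r))"
  proof -
    have "(Pv k r has_derivative (\<lambda>h. (0, emb r h))) (at (snd (z (Suc k)) $ r))"
      unfolding Pv_def[abs_def] by (intro has_derivative_Pair hasd_mix has_derivative_const)
    from has_derivative_compose[OF this Q_grad] show ?thesis unfolding Apt_def by simp
  qed
  have d2: "(\<lambda>h. inner (gradQ (Apt k r)) (0, emb r h)) = (\<lambda>h. inner (snd (gradQ (Apt k r)) $ r) h)"
    by (auto simp: inner_Pair_0 inner_emb)
  show "((\<lambda>y. Q (Pv k r y) + (norm (y - snd (z k) $ r))^2 / (2 * mu k r)) has_derivative (\<lambda>y. inner (GV k r) y))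
     (at (snd (z (Suc k)) $ r))"
    using has_derivative_add[OF d1[unfolded d2] hasd_sq[OF l0, of "snd (z k) $ r" "snd (z (Suc k)) $ r"]]
    unfolding GV_def by (simp add: inner_add_left)
qed

definition "W k = (\<chi> r. - GU k r, \<chi> r. - GV k r) + gradQ (z (Suc k))"

lemma W_frechet: "W k \<in> frechet_subdiff L (z (Suc k))"
  unfolding W_def L_def by (rule frechet_Lfun[OF subU subV Q_grad])

end

context pam begin

lemma blockfrom_Mid: "blockfrom (Mid k r) (z (Suc k)) (z k)"
  unfolding blockfrom_def Mid_def Pu_def by (auto simp: mix_nth)
lemma blockfrom_Apt: "blockfrom (Apt k r) (z (Suc k)) (z k)"
  unfolding blockfrom_def Apt_def Pv_def by (auto simp: mix_nth)

lemma W_bound: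
  assumes lip: "C-lipschitz_on S gradQ" and S1: "z (Suc k) \<in> S"
    and SM: "\<And>r. Mid k r \<in> S" and SA: "\<And>r. Apt k r \<in> S"
  shows "norm (W k) \<le> (C * sqrt (2 * real CARD('r)) + 1 / rminus) * norm (z (Suc k) - z k)"
proof -
  define d where "d = norm (z (Suc k) - z k)"
  have C0: "0 \<le> C" using lip unfolding lipschitz_on_def by blast
  define D where "D = (\<chi> r. fst (gradQ (z (Suc k))) $ r - fst (gradQ (Mid k r)) $ r,
                       \<chi> r. snd (gradQ (z (Suc k))) $ r - snd (gradQ (Apt k r)) $ r)"
  define E where "E = (\<chi> r. (1 / lam k r) *\<^sub>R (fst (z (Suc k)) $ r - fst (z k) $ r),
                       \<chi> r. (1 / mu k r) *\<^sub>R (snd (z (Suc k)) $ r - snd (z k) $ r))"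
  have WDE: "W k = D - E"
    unfolding W_def D_def E_def GU_def GV_def by (simp add: prod_eq_iff vec_eq_iff)
  have dM: "norm (gradQ (z (Suc k)) - gradQ (Mid k r)) \<le> C * d" for r
  proof -
    have "norm (gradQ (z (Suc k)) - gradQ (Mid k r)) \<le> C * norm (z (Suc k) - Mid k r)"
      using lip S1 SM[of r] unfolding lipschitz_on_def dist_norm by blast
    also have "norm (z (Suc k) - Mid k r) \<le> d"
      using blockfrom_dist[OF blockfrom_Mid[of k r]] unfolding d_def by (simp add: norm_minus_commute)
    finally show ?thesis using C0 by (simp add: mult_left_mono order_trans)
  qed
  have dA: "norm (gradQ (z (Suc k)) - gradQ (Apt k r)) \<le> C * d" for r
  proof -
    have "norm (gradQ (z (Suc k)) - gradQ (Apt k r)) \<le> C * norm (z (Suc k) - Apt k r)"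
      using lip S1 SA[of r] unfolding lipschitz_on_def dist_norm by blast
    also have "norm (z (Suc k) - Apt k r) \<le> d"
      using blockfrom_dist[OF blockfrom_Apt[of k r]] unfolding d_def by (simp add: norm_minus_commute)
    finally show ?thesis using C0 by (simp add: mult_left_mono order_trans)
  qed
  have D1: "(norm (fst D $ r))^2 \<le> (C * d)^2" for r
  proof -
    have "norm (fst D $ r) \<le> C * d"
      using norm_block_fst[of "gradQ (z (Suc k)) - gradQ (Mid k r)" r] dM[of r]
      unfolding D_def by (simp add: vector_minus_component)
    then show ?thesis by (simp add: power_mono)
  qed
  have D2: "(norm (snd D $ r))^2 \<le> (C * d)^2" for r
  proof -
    have "norm (snd D $ r) \<le> C * d"
      using norm_block_snd[of "gradQ (z (Suc k)) - gradQ (Apt k r)" r] dA[of r]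
      unfolding D_def by (simp add: vector_minus_component)
    then show ?thesis by (simp add: power_mono)
  qed
  have S1: "(\<Sum>r\<in>UNIV. (norm (fst D $ r))^2) \<le> (\<Sum>r\<in>(UNIV::'r set). (C * d)^2)"
    by (rule sum_mono) (rule D1)
  have S2: "(\<Sum>r\<in>UNIV. (norm (snd D $ r))^2) \<le> (\<Sum>r\<in>(UNIV::'r set). (C * d)^2)"
    by (rule sum_mono) (rule D2)
  have "(norm D)^2 \<le> (\<Sum>r\<in>(UNIV::'r set). (C * d)^2) + (\<Sum>r\<in>(UNIV::'r set). (C * d)^2)"
    unfolding normsq_pt using add_mono[OF S1 S2] .
  also have "\<dots> = (sqrt (2 * real CARD('r)) * C * d)^2"
  proof -
    have sq: "(sqrt (2 * real CARD('r)))^2 = 2 * real CARD('r)" by simp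
    show ?thesis unfolding power_mult_distrib sq sum_constant by simp
  qed
  finally have ND2: "(norm D)^2 \<le> (sqrt (2 * real CARD('r)) * C * d)^2" .
  have d0: "0 \<le> d" unfolding d_def by simp
  have ND: "norm D \<le> sqrt (2 * real CARD('r)) * C * d"
    by (rule power2_le_imp_le[OF ND2]) (use C0 d0 in simp)
  have rm: "0 < rminus" by (rule r_pos)
  have E1: "(norm (fst E $ r))^2 \<le> (1 / rminus)^2 * (norm (fst (z (Suc k)) $ r - fst (z k) $ r))^2" for r
  proof -
    have l: "rminus < lam k r" using lam_bnd by blast
    have "norm (fst E $ r) = (1 / lam k r) * norm (fst (z (Suc k)) $ r - fst (z k) $ r)"
      unfolding E_def using l rm by simp
    also have "\<dots> \<le> (1 / rminus) * norm (fst (z (Suc k)) $ r - fst (z k) $ r)"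
      using l rm by (intro mult_right_mono) (auto simp: frac_le)
    finally have "norm (fst E $ r) \<le> (1 / rminus) * norm (fst (z (Suc k)) $ r - fst (z k) $ r)" .
    then have "(norm (fst E $ r))^2 \<le> ((1 / rminus) * norm (fst (z (Suc k)) $ r - fst (z k) $ r))^2"
      by (rule power_mono) simp
    then show ?thesis by (simp only: power_mult_distrib)
  qed
  have E2: "(norm (snd E $ r))^2 \<le> (1 / rminus)^2 * (norm (snd (z (Suc k)) $ r - snd (z k) $ r))^2" for r
  proof -
    have l: "rminus < mu k r" using mu_bnd by blast
    have "norm (snd E $ r) = (1 / mu k r) * norm (snd (z (Suc k)) $ r - snd (z k) $ r)"
      unfolding E_def using l rm by simp
    also have "\<dots> \<le> (1 / rminus) * norm (snd (z (Suc k)) $ r - snd (z k) $ r)"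
      using l rm by (intro mult_right_mono) (auto simp: frac_le)
    finally have "norm (snd E $ r) \<le> (1 / rminus) * norm (snd (z (Suc k)) $ r - snd (z k) $ r)" .
    then have "(norm (snd E $ r))^2 \<le> ((1 / rminus) * norm (snd (z (Suc k)) $ r - snd (z k) $ r))^2"
      by (rule power_mono) simp
    then show ?thesis by (simp only: power_mult_distrib)
  qed
  have dd: "d^2 = (\<Sum>s\<in>UNIV. (norm (fst (z (Suc k)) $ s - fst (z k) $ s))^2)
     + (\<Sum>s\<in>UNIV. (norm (snd (z (Suc k)) $ s - snd (z k) $ s))^2)"
    unfolding d_def using normsq_pt[of "z (Suc k) - z k"] by (simp only: fst_diff snd_diff vector_minus_component)
  have "(norm E)^2 \<le> (\<Sum>r\<in>UNIV. (1 / rminus)^2 * (norm (fst (z (Suc k)) $ r - fst (z k) $ r))^2)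
      + (\<Sum>r\<in>UNIV. (1 / rminus)^2 * (norm (snd (z (Suc k)) $ r - snd (z k) $ r))^2)"
    unfolding normsq_pt by (intro add_mono sum_mono E1 E2)
  also have "\<dots> = (d / rminus)^2"
    unfolding sum_distrib_left[symmetric] distrib_left[symmetric] dd[symmetric] by (simp add: power_divide)
  finally have NE2: "(norm E)^2 \<le> (d / rminus)^2" .
  have NE: "norm E \<le> d / rminus"
    by (rule power2_le_imp_le[OF NE2]) (use rm d0 in simp)
  have "norm (W k) \<le> norm D + norm E" unfolding WDE by (rule norm_triangle_ineq4)
  also have "\<dots> \<le> sqrt (2 * real CARD('r)) * C * d + d / rminus" using ND NE by simp
  also have "\<dots> = (C * sqrt (2 * real CARD('r)) + 1 / rminus) * d" by (simp add: algebra_simps)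
  finally show ?thesis unfolding d_def .
qed

end

lemma concave_tangent:
  fixes \<phi> :: "real \<Rightarrow> real" and \<eta> :: ereal
  assumes conc: "concave_on {t. 0 \<le> t \<and> ereal t < \<eta>} \<phi>"
    and diff: "\<phi> differentiable (at s)" and s: "0 < s" "ereal s < \<eta>" and t: "0 < t" "ereal t < \<eta>"
  shows "\<phi> s - \<phi> t \<ge> deriv \<phi> s * (s - t)"
proof -
  have "ereal (max s t) < \<eta>" using s t by (simp add: max_def)
  from dense[OF this] obtain b' where b1: "ereal (max s t) < b'" and b2: "b' < \<eta>" by blast
  obtain b where b: "b' = ereal b" using b1 b2 by (cases b') auto
  define A where "A = {0<..<b}"
  have sub: "A \<subseteq> {t. 0 \<le> t \<and> ereal t < \<eta>}"
  proof
    fix x assume "x \<in> A"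
    then have x1: "0 < x" and x2: "ereal x < b'" unfolding A_def b by auto
    have "ereal x < \<eta>" using x2 b2 by (rule less_trans)
    then show "x \<in> {t. 0 \<le> t \<and> ereal t < \<eta>}" using x1 by simp
  qed
  have "max s t < b" using b1 unfolding b by simp
  then have sA: "s \<in> A" and tA: "t \<in> A" using s t unfolding A_def by auto
  have cA: "convex_on A (\<lambda>x. - \<phi> x)"
    using convex_on_subset[OF conc[unfolded concave_on_def] sub] unfolding A_def by simp
  have iA: "interior A = A" unfolding A_def by (simp add: interior_open)
  have D1: "(\<phi> has_field_derivative deriv \<phi> s) (at s)"
    by (rule DERIV_deriv_iff_real_differentiable[THEN iffD2, OF diff])
  have D2: "((\<lambda>x. - \<phi> x) has_field_derivative - deriv \<phi> s) (at s within A)"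
    by (rule has_field_derivative_at_within[OF DERIV_minus[OF D1]])
  have conA: "connected A" unfolding A_def by simp
  have sI: "s \<in> interior A" using sA iA by simp
  have "- \<phi> t - - \<phi> s \<ge> - deriv \<phi> s * (t - s)"
    by (rule convex_on_imp_above_tangent[OF cA conA sI tA D2])
  then show ?thesis by (simp add: algebra_simps)
qed

lemma frechet_sub_limiting: "w \<in> frechet_subdiff F x \<Longrightarrow> w \<in> limiting_subdiff F x"
  unfolding limiting_subdiff_def mem_Collect_eq
  by (rule exI[where x="\<lambda>_. x"], rule exI[where x="\<lambda>_. w"], simp)

lemma two_le_sum: fixes x a b :: real assumes "x^2 \<le> a * b" "0 \<le> a" "0 \<le> b" "0 \<le> x"
  shows "2 * x \<le> a + b"
proof -
  have e1: "(a + b)^2 = a^2 + b^2 + 2 * a * b" by (rule power2_sum)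
  have e2: "(a - b)^2 = a^2 + b^2 - 2 * a * b" by (rule power2_diff)
  have "0 \<le> (a - b)^2" by (rule zero_le_power2)
  have e3: "(2 * x)^2 = 4 * x^2" by (simp add: power_mult_distrib)
  have "(2 * x)^2 \<le> (a + b)^2" using e1 e2 e3 assms(1) \<open>0 \<le> (a - b)^2\<close> by linarith
  then show ?thesis by (rule power2_le_imp_le) (use assms in simp)
qed


locale pamKL = pam f g Q gradQ lam mu rminus rplus z L
  for f :: "'r::{finite,linorder} \<Rightarrow> real^'n1::finite \<Rightarrow> ereal"
    and g :: "'r \<Rightarrow> real^'n2::finite \<Rightarrow> ereal"
    and Q :: "('n1,'n2,'r) pt \<Rightarrow> real"
    and gradQ :: "('n1,'n2,'r) pt \<Rightarrow> ('n1,'n2,'r) pt"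
    and lam mu :: "nat \<Rightarrow> 'r \<Rightarrow> real"
    and rminus rplus :: real
    and z :: "nat \<Rightarrow> ('n1,'n2,'r) pt"
    and L :: "('n1,'n2,'r) pt \<Rightarrow> ereal" +
  fixes zbar :: "('n1,'n2,'r) pt"
    and \<eta> :: ereal and U :: "('n1,'n2,'r) pt set" and \<phi> :: "real \<Rightarrow> real"
    and \<rho> C M :: real
  assumes KL: "KL_at L zbar \<eta> U \<phi>"
    and rho_pos: "\<rho> > 0" and ball_U: "ball zbar \<rho> \<subseteq> U"
    and C_lip: "C-lipschitz_on (ball zbar (sqrt (2 * real CARD('r)) * \<rho>)) gradQ"
    and M_def: "M = 2 * rplus * (C * sqrt (2 * real CARD('r)) + 1 / rminus)"
    and l_bounds: "\<And>k. L zbar < L (z k) \<and> L (z k) < L zbar + \<eta>"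
    and init: "M * \<phi> (real_of_ereal (L (z 0)) - real_of_ereal (L zbar))
               + 2 * sqrt (2 * rplus) * sqrt (real_of_ereal (L (z 0)) - real_of_ereal (L zbar))
               + norm (z 0 - zbar) < \<rho>"
begin

definition "lb = real_of_ereal (L zbar)"
definition "l k = real_of_ereal (L (z k))"
definition "d k = norm (z (Suc k) - z k)"
definition "ph k = \<phi> (l k - lb)"
definition "A = C * sqrt (2 * real CARD('r)) + 1 / rminus"

lemma C0: "0 \<le> C" using C_lip unfolding lipschitz_on_def by blast
lemma A_pos: "0 < A" unfolding A_def using C0 r_pos by (intro add_nonneg_pos mult_nonneg_nonneg) auto
lemma M_A: "M = 2 * rplus * A" unfolding M_def A_def ..
lemma M0: "0 \<le> M" unfolding M_A using A_pos r_pos r_lt by simp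

lemma Lz: "L (z k) = ereal (l k)" unfolding l_def using l_fin[of k] by (cases "L (z k)") auto
lemma Lzbar: "L zbar = ereal lb"
proof -
  obtain m where m: "\<forall>x. ereal m \<le> L x" using L_bdd by blast
  have "L zbar \<noteq> -\<infinity>" using m[rule_format, of zbar] by auto
  moreover have "L zbar \<noteq> \<infinity>" using l_bounds[of 0] by auto
  ultimately show ?thesis unfolding lb_def by (cases "L zbar") auto
qed

lemma s_pos: "lb < l k" using l_bounds[of k] unfolding Lz Lzbar by simp
lemma s_eta: "ereal (l k - lb) < \<eta>"
proof -
  have "ereal (l k) < ereal lb + \<eta>" using l_bounds[of k] unfolding Lz Lzbar by simp
  then show ?thesis by (cases \<eta>) auto
qed

lemma desc_real: "l (Suc k) + (d k)^2 / (2 * rplus) \<le> l k"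
  using descent[of k] unfolding Lz d_def by simp

lemma l_dec: "l (Suc k) \<le> l k"
proof -
  have "0 \<le> (d k)^2 / (2 * rplus)" using r_pos r_lt by simp
  then show ?thesis using desc_real[of k] by linarith
qed

lemma d0: "0 \<le> d k" unfolding d_def by simp

lemma d_sq: "(d k)^2 \<le> 2 * rplus * (l k - l (Suc k))"
  using desc_real[of k] r_pos r_lt by (simp add: field_simps)

lemma d_le: "d k \<le> sqrt (2 * rplus) * sqrt (l k - lb)"
proof -
  have "(d k)^2 \<le> 2 * rplus * (l k - lb)"
  proof -
    have "2 * rplus * (l k - l (Suc k)) \<le> 2 * rplus * (l k - lb)"
      using s_pos[of "Suc k"] r_pos r_lt by (intro mult_left_mono) auto
    then show ?thesis using d_sq[of k] by linarith
  qed
  then have "d k \<le> sqrt (2 * rplus * (l k - lb))" using d0 real_le_rsqrt by blast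
  then show ?thesis by (simp add: real_sqrt_mult)
qed

lemma KL_parts: "concave_on {t. 0 \<le> t \<and> ereal t < \<eta>} \<phi>"
  "\<And>t. 0 < t \<and> ereal t < \<eta> \<Longrightarrow> \<phi> differentiable (at t)"
  "\<And>t. 0 < t \<and> ereal t < \<eta> \<Longrightarrow> deriv \<phi> t > 0"
  "\<And>t. 0 \<le> t \<and> ereal t < \<eta> \<Longrightarrow> 0 \<le> \<phi> t"
  "\<And>x. x \<in> U \<Longrightarrow> L zbar < L x \<and> L x < L zbar + \<eta> \<Longrightarrow>
        limiting_subdiff L x = {} \<or> deriv \<phi> (real_of_ereal (L x - L zbar)) * infdist 0 (limiting_subdiff L x) \<ge> 1"
  using KL unfolding KL_at_def by blast+

lemma ph0: "0 \<le> ph k" unfolding ph_def using KL_parts(4) s_pos s_eta by (simp add: less_imp_le)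

lemma tangent: "ph j - ph k \<ge> deriv \<phi> (l j - lb) * (l j - l k)"
  using concave_tangent[OF KL_parts(1) KL_parts(2)[of "l j - lb"], of "l k - lb"] s_pos s_eta
  unfolding ph_def by simp

lemma ph_dec: "ph (Suc k) \<le> ph k"
proof -
  have "deriv \<phi> (l k - lb) * (l k - l (Suc k)) \<ge> 0"
    using KL_parts(3)[of "l k - lb"] s_pos s_eta l_dec[of k] by simp
  then show ?thesis using tangent[of k "Suc k"] by simp
qed

definition "B = ball zbar \<rho>"

lemma step:
  assumes "z k \<in> B" "z (Suc k) \<in> B"
  shows "2 * d (Suc k) \<le> d k + M * (ph (Suc k) - ph (Suc (Suc k)))"
proof -
  define S where "S = ball zbar (sqrt (2 * real CARD('r)) * \<rho>)"
  have c1: "1 \<le> CARD('r)" by (simp add: Suc_le_eq)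
  then have c2: "(1::real) \<le> real CARD('r)" by simp
  have c3: "(1::real)^2 \<le> 2 * real CARD('r)"
  proof -
    have "(1::real)^2 = 1" by simp
    with c2 show ?thesis by linarith
  qed
  have R1: "1 \<le> sqrt (2 * real CARD('r))" by (rule real_le_rsqrt[OF c3])
  have ballS: "p \<in> S" if "blockfrom p (z (Suc k)) (z k)" for p
  proof -
    have "(norm (p - zbar))^2 \<le> (norm (z (Suc k) - zbar))^2 + (norm (z k - zbar))^2"
      by (rule blockfrom_ball[OF that])
    also have "\<dots> < \<rho>^2 + \<rho>^2"
      using assms unfolding B_def by (intro add_strict_mono power_strict_mono) (auto simp: dist_norm norm_minus_commute)
    also have "\<dots> \<le> (sqrt (2 * real CARD('r)) * \<rho>)^2"
      using rho_pos by (simp add: power_mult_distrib)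
    finally have sq: "(norm (p - zbar))^2 < (sqrt (2 * real CARD('r)) * \<rho>)^2" .
    have "norm (p - zbar) < sqrt (2 * real CARD('r)) * \<rho>"
      by (rule power2_less_imp_less[OF sq]) (use rho_pos in simp)
    then show ?thesis unfolding S_def by (simp add: dist_norm norm_minus_commute)
  qed
  have S1: "z (Suc k) \<in> S" by (rule ballS) (auto simp: blockfrom_def)
  have Wb: "norm (W k) \<le> A * d k"
    using W_bound[OF C_lip[folded S_def] S1 ballS[OF blockfrom_Mid] ballS[OF blockfrom_Apt]]
    unfolding A_def d_def .
  have Wl: "W k \<in> limiting_subdiff L (z (Suc k))" by (rule frechet_sub_limiting[OF W_frechet])
  have U1: "z (Suc k) \<in> U" using assms ball_U unfolding B_def by blast
  have kl: "deriv \<phi> (real_of_ereal (L (z (Suc k)) - L zbar)) * infdist 0 (limiting_subdiff L (z (Suc k))) \<ge> 1"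
    using KL_parts(5)[OF U1 l_bounds[of "Suc k"]] Wl by blast
  have eqs: "real_of_ereal (L (z (Suc k)) - L zbar) = l (Suc k) - lb" unfolding Lz Lzbar by simp
  define p where "p = deriv \<phi> (l (Suc k) - lb)"
  have p0: "p > 0" unfolding p_def using KL_parts(3) s_pos s_eta by simp
  have "infdist 0 (limiting_subdiff L (z (Suc k))) \<le> norm (W k)"
    using infdist_le[OF Wl, of 0] by simp
  then have "infdist 0 (limiting_subdiff L (z (Suc k))) \<le> A * d k" using Wb by linarith
  then have "p * infdist 0 (limiting_subdiff L (z (Suc k))) \<le> p * (A * d k)" using p0 by (intro mult_left_mono) auto
  then have "1 \<le> p * (A * d k)" using kl unfolding eqs p_def[symmetric] by linarith
  then have ip: "1 / p \<le> A * d k" using p0 by (simp add: field_simps)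
  have tg: "ph (Suc k) - ph (Suc (Suc k)) \<ge> p * (l (Suc k) - l (Suc (Suc k)))"
    using tangent unfolding p_def .
  have ldiff: "l (Suc k) - l (Suc (Suc k)) \<le> (ph (Suc k) - ph (Suc (Suc k))) * (1 / p)"
    using tg p0 by (simp add: field_simps)
  have Dn: "0 \<le> ph (Suc k) - ph (Suc (Suc k))" using ph_dec[of "Suc k"] by simp
  have "(d (Suc k))^2 \<le> 2 * rplus * (l (Suc k) - l (Suc (Suc k)))" by (rule d_sq)
  also have "\<dots> \<le> 2 * rplus * ((ph (Suc k) - ph (Suc (Suc k))) * (A * d k))"
  proof -
    have "(ph (Suc k) - ph (Suc (Suc k))) * (1 / p) \<le> (ph (Suc k) - ph (Suc (Suc k))) * (A * d k)"
      using ip Dn by (intro mult_left_mono) auto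
    then have "l (Suc k) - l (Suc (Suc k)) \<le> (ph (Suc k) - ph (Suc (Suc k))) * (A * d k)" using ldiff by linarith
    then show ?thesis using r_pos r_lt by (intro mult_left_mono) auto
  qed
  also have "\<dots> = (M * (ph (Suc k) - ph (Suc (Suc k)))) * d k" unfolding M_A by (simp add: algebra_simps)
  finally have "(d (Suc k))^2 \<le> (M * (ph (Suc k) - ph (Suc (Suc k)))) * d k" .
  from two_le_sum[OF this _ d0 d0] M0 Dn show ?thesis by (simp add: add.commute)
qed

end

context pamKL begin

lemma tele: "norm (z n - zbar) \<le> norm (z 0 - zbar) + (\<Sum>i<n. d i)"
proof (induction n)
  case 0 then show ?case by simp
next
  case (Suc n)
  have "norm (z (Suc n) - zbar) \<le> norm (z (Suc n) - z n) + norm (z n - zbar)"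
    using norm_triangle_ineq[of "z (Suc n) - z n" "z n - zbar"] by simp
  then show ?case using Suc.IH unfolding d_def by simp
qed

lemma partial:
  assumes B: "\<forall>j\<le>k + n. z j \<in> B" and n: "1 \<le> n"
  shows "(\<Sum>j<n. d (Suc k + j)) + d (k + n) \<le> d k + M * (ph (Suc k) - ph (Suc (k + n)))"
  using B n
proof (induction n)
  case 0 then show ?case by simp
next
  case (Suc n)
  show ?case
  proof (cases "n = 0")
    case True
    have "2 * d (Suc k) \<le> d k + M * (ph (Suc k) - ph (Suc (Suc k)))"
      by (rule step) (use Suc.prems in auto)
    then show ?thesis using True by simp
  next
    case False
    have IH: "(\<Sum>j<n. d (Suc k + j)) + d (k + n) \<le> d k + M * (ph (Suc k) - ph (Suc (k + n)))"
      using Suc.IH Suc.prems False by auto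
    have st: "2 * d (Suc (k + n)) \<le> d (k + n) + M * (ph (Suc (k + n)) - ph (Suc (Suc (k + n))))"
      by (rule step) (use Suc.prems in auto)
    have "(\<Sum>j<Suc n. d (Suc k + j)) + d (k + Suc n) = (\<Sum>j<n. d (Suc k + j)) + 2 * d (Suc (k + n))"
      by simp
    also have "\<dots> \<le> d k + M * (ph (Suc k) - ph (Suc (k + n))) - d (k + n) + (d (k + n) + M * (ph (Suc (k + n)) - ph (Suc (Suc (k + n)))))"
      using IH st by linarith
    also have "\<dots> = d k + M * (ph (Suc k) - ph (Suc (k + Suc n)))"
      by (simp add: algebra_simps)
    finally show ?thesis .
  qed
qed

lemma partial2:
  assumes B: "\<forall>j\<le>k + n. z j \<in> B"
  shows "(\<Sum>j<n. d (Suc k + j)) \<le> d k + M * ph k"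
proof (cases "n = 0")
  case True then show ?thesis using d0[of k] ph0[of k] M0 by simp
next
  case False
  then have P: "(\<Sum>j<n. d (Suc k + j)) + d (k + n) \<le> d k + M * (ph (Suc k) - ph (Suc (k + n)))"
    using partial[OF B] by simp
  have "M * (ph (Suc k) - ph (Suc (k + n))) \<le> M * ph k"
    using M0 ph0[of "Suc (k + n)"] ph_dec[of k] by (intro mult_left_mono) auto
  then show ?thesis using P d0[of "k + n"] by linarith
qed

lemma init': "M * ph 0 + 2 * sqrt (2 * rplus) * sqrt (l 0 - lb) + norm (z 0 - zbar) < \<rho>"
  using init unfolding ph_def l_def lb_def .

lemma allB_aux: "\<forall>j\<le>N. z j \<in> B"
proof (induction N)
  case 0
  have "0 \<le> M * ph 0" using M0 ph0 by simp
  moreover have "0 \<le> 2 * sqrt (2 * rplus) * sqrt (l 0 - lb)" using s_pos[of 0] r_pos r_lt by simp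
  ultimately have "norm (z 0 - zbar) < \<rho>" using init' by linarith
  then show ?case unfolding B_def by (simp add: dist_norm norm_minus_commute)
next
  case (Suc N)
  have s: "(\<Sum>i<Suc N. d i) = d 0 + (\<Sum>j<N. d (Suc 0 + j))"
    unfolding sum.lessThan_Suc_shift by simp
  have p: "(\<Sum>j<N. d (Suc 0 + j)) \<le> d 0 + M * ph 0"
    using partial2[of 0 N] Suc.IH by simp
  have "d 0 \<le> sqrt (2 * rplus) * sqrt (l 0 - lb)" by (rule d_le)
  then have "norm (z (Suc N) - zbar) < \<rho>"
    using tele[of "Suc N"] s p init' by linarith
  then have "z (Suc N) \<in> B" unfolding B_def by (simp add: dist_norm norm_minus_commute)
  then show ?case using Suc.IH le_Suc_eq by auto
qed

lemma allB: "z n \<in> B" using allB_aux[of n] by simp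

lemma tail_bound: "(\<Sum>j<n. d (j + k + 1)) \<le> d k + M * ph k"
proof -
  have "(\<Sum>j<n. d (j + k + 1)) = (\<Sum>j<n. d (Suc k + j))" by (simp add: add.commute)
  also have "\<dots> \<le> d k + M * ph k" by (rule partial2) (simp add: allB)
  finally show ?thesis .
qed

lemma tail_summable: "summable (\<lambda>j. d (j + k + 1))"
  by (rule summableI_nonneg_bounded[OF d0 tail_bound])

lemma tail_sum: "(\<Sum>j. d (j + k + 1)) \<le> M * ph k + sqrt (2 * rplus) * sqrt (l k - lb)"
proof -
  have "(\<Sum>j. d (j + k + 1)) \<le> d k + M * ph k" by (rule suminf_le_const[OF tail_summable tail_bound])
  then show ?thesis using d_le[of k] by linarith
qed

lemma d_summable: "summable d"
proof -
  have "summable (\<lambda>j. d (Suc j))" using tail_summable[of 0] by simp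
  then show ?thesis by (simp add: summable_Suc_iff)
qed

lemma z_conv: "\<exists>zs. z \<longlonglongrightarrow> zs"
proof -
  have "summable (\<lambda>i. norm (z (Suc i) - z i))" using d_summable unfolding d_def .
  then have sm: "summable (\<lambda>i. z (Suc i) - z i)" by (rule summable_norm_cancel)
  have "(\<lambda>n. z 0 + (\<Sum>i<n. z (Suc i) - z i)) \<longlonglongrightarrow> z 0 + suminf (\<lambda>i. z (Suc i) - z i)"
    by (intro tendsto_add tendsto_const summable_LIMSEQ[OF sm])
  moreover have "(\<lambda>n. z 0 + (\<Sum>i<n. z (Suc i) - z i)) = z"
    by (auto simp: sum_lessThan_telescope)
  ultimately have "z \<longlonglongrightarrow> z 0 + suminf (\<lambda>i. z (Suc i) - z i)" by simp
  then show ?thesis by (rule exI)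
qed

lemma W_bound': "norm (W k) \<le> A * d k"
proof -
  define S where "S = ball zbar (sqrt (2 * real CARD('r)) * \<rho>)"
  have c1: "1 \<le> CARD('r)" by (simp add: Suc_le_eq)
  then have c2: "(1::real) \<le> real CARD('r)" by simp
  have c3: "(1::real)^2 \<le> 2 * real CARD('r)"
  proof -
    have "(1::real)^2 = 1" by simp
    with c2 show ?thesis by linarith
  qed
  have R1: "1 \<le> sqrt (2 * real CARD('r))" by (rule real_le_rsqrt[OF c3])
  have ballS: "p \<in> S" if "blockfrom p (z (Suc k)) (z k)" for p
  proof -
    have "(norm (p - zbar))^2 \<le> (norm (z (Suc k) - zbar))^2 + (norm (z k - zbar))^2"
      by (rule blockfrom_ball[OF that])
    also have "\<dots> < \<rho>^2 + \<rho>^2"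
      using allB[of k] allB[of "Suc k"] unfolding B_def
      by (intro add_strict_mono power_strict_mono) (auto simp: dist_norm norm_minus_commute)
    also have "\<dots> \<le> (sqrt (2 * real CARD('r)) * \<rho>)^2"
      using rho_pos by (simp add: power_mult_distrib)
    finally have sq: "(norm (p - zbar))^2 < (sqrt (2 * real CARD('r)) * \<rho>)^2" .
    have "norm (p - zbar) < sqrt (2 * real CARD('r)) * \<rho>"
      by (rule power2_less_imp_less[OF sq]) (use rho_pos in simp)
    then show ?thesis unfolding S_def by (simp add: dist_norm norm_minus_commute)
  qed
  have S1: "z (Suc k) \<in> S" by (rule ballS) (auto simp: blockfrom_def)
  show ?thesis
    using W_bound[OF C_lip[folded S_def] S1 ballS[OF blockfrom_Mid] ballS[OF blockfrom_Apt]]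
    unfolding A_def d_def .
qed

lemma W_tendsto: "W \<longlonglongrightarrow> 0"
proof -
  have "(\<lambda>k. A * d k) \<longlonglongrightarrow> 0"
    using tendsto_mult_right_zero[OF summable_LIMSEQ_zero[OF d_summable]] by simp
  then show ?thesis
    by (rule Lim_null_comparison[rotated]) (use W_bound' in \<open>auto intro: always_eventually\<close>)
qed

end

lemma lsc_seq:
  fixes F :: "'a::metric_space \<Rightarrow> ereal"
  assumes lsc: "lsc_fun F" and xs: "xs \<longlonglongrightarrow> x" and c: "c < F x"
  shows "eventually (\<lambda>k. c < F (xs k)) sequentially"
proof -
  have "F x \<le> Liminf (at x) F" using lsc unfolding lsc_fun_def by blast
  then have "eventually (\<lambda>u. c < F u) (at x)" using c unfolding le_Liminf_iff by blast
  then have "eventually (\<lambda>u. u \<noteq> x \<longrightarrow> c < F u) (nhds x)" unfolding eventually_at_filter by simp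
  then have "eventually (\<lambda>u. c < F u) (nhds x)" by eventually_elim (use c in auto)
  from eventually_compose_filterlim[OF this xs] show ?thesis .
qed

lemma attentive:
  fixes F :: "'a::metric_space \<Rightarrow> ereal"
  assumes lsc: "lsc_fun F" and xs: "xs \<longlonglongrightarrow> x"
    and ineq: "\<And>k. F (xs k) \<le> F x + ereal (e k)" and e: "e \<longlonglongrightarrow> 0" and fin: "F x \<noteq> -\<infinity>"
  shows "(\<lambda>k. F (xs k)) \<longlonglongrightarrow> F x"
  unfolding order_tendsto_iff
proof (intro conjI allI impI)
  fix c assume "c < F x" then show "eventually (\<lambda>k. c < F (xs k)) sequentially"
    by (rule lsc_seq[OF lsc xs])
next
  fix c assume c: "F x < c"
  then obtain a where a: "F x = ereal a" using fin by (cases "F x") auto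
  show "eventually (\<lambda>k. F (xs k) < c) sequentially"
  proof (cases c)
    case PInf
    have "F (xs k) < c" for k
    proof -
      have "F (xs k) \<le> ereal (a + e k)" using ineq[of k] a by simp
      then show ?thesis using PInf by auto
    qed
    then show ?thesis by simp
  next
    case MInf then show ?thesis using c by simp
  next
    case (real b)
    have ab: "0 < b - a" using c a real by simp
    have "eventually (\<lambda>k. e k < b - a) sequentially"
      using order_tendstoD(2)[OF e ab] .
    then show ?thesis
    proof eventually_elim
      case (elim k)
      have "F (xs k) \<le> ereal (a + e k)" using ineq[of k] a by simp
      also have "\<dots> < c" using elim real by simp
      finally show ?case .
    qed
  qed
qed

lemma tendsto_sum_ereal_nonneg:
  fixes f :: "'i \<Rightarrow> nat \<Rightarrow> ereal"
  assumes "\<And>i. i \<in> S \<Longrightarrow> f i \<longlonglongrightarrow> a i" and "\<And>i. a i \<noteq> -\<infinity>"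
  shows "(\<lambda>k. \<Sum>i\<in>S. f i k) \<longlonglongrightarrow> (\<Sum>i\<in>S. a i)"
  using assms(1)
proof (induction S rule: infinite_finite_induct)
  case (infinite A) then show ?case by simp
next
  case empty then show ?case by simp
next
  case (insert i A)
  have s: "(\<Sum>i\<in>A. a i) \<noteq> -\<infinity>"
  proof -
    have "(\<Sum>i\<in>A. a i) \<noteq> -\<infinity>" if "finite A" for A
      using that by (induction A rule: finite_induct) (auto simp: assms(2))
    then show ?thesis using insert(1) by blast
  qed
  have "(\<lambda>k. f i k + (\<Sum>i\<in>A. f i k)) \<longlonglongrightarrow> a i + (\<Sum>i\<in>A. a i)"
    by (rule tendsto_add_ereal_nonneg[OF assms(2) s]) (use insert in auto)
  then show ?case using insert(1,2) by simp
qed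

definition block3 :: "('n1::finite,'n2::finite,'r::finite) pt \<Rightarrow> ('n1,'n2,'r) pt \<Rightarrow> ('n1,'n2,'r) pt \<Rightarrow> ('n1,'n2,'r) pt \<Rightarrow> bool" where
  "block3 P A B c \<longleftrightarrow> (\<forall>s. (fst P $ s = fst A $ s \<or> fst P $ s = fst B $ s \<or> fst P $ s = fst c $ s)
     \<and> (snd P $ s = snd A $ s \<or> snd P $ s = snd B $ s \<or> snd P $ s = snd c $ s))"

lemma block3_norm:
  assumes "block3 P A B c"
  shows "norm (P - c) \<le> norm (A - c) + norm (B - c)"
proof -
  have 1: "(norm (fst (P - c) $ r))^2 \<le> (norm (fst (A - c) $ r))^2 + (norm (fst (B - c) $ r))^2" for r
    using assms unfolding block3_def by (cases "fst P $ r = fst A $ r"; cases "fst P $ r = fst B $ r") auto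
  have 2: "(norm (snd (P - c) $ r))^2 \<le> (norm (snd (A - c) $ r))^2 + (norm (snd (B - c) $ r))^2" for r
    using assms unfolding block3_def by (cases "snd P $ r = snd A $ r"; cases "snd P $ r = snd B $ r") auto
  have "(norm (P - c))^2 \<le> (\<Sum>r\<in>UNIV. (norm (fst (A - c) $ r))^2 + (norm (fst (B - c) $ r))^2)
      + (\<Sum>r\<in>UNIV. (norm (snd (A - c) $ r))^2 + (norm (snd (B - c) $ r))^2)"
    unfolding normsq_pt by (intro add_mono sum_mono 1 2)
  also have "\<dots> = (norm (A - c))^2 + (norm (B - c))^2"
    unfolding normsq_pt sum.distrib by simp
  also have "\<dots> \<le> (norm (A - c) + norm (B - c))^2"
    by (simp add: power2_sum)
  finally show ?thesis by (rule power2_le_imp_le) simp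
qed

context pam begin

lemma ineqU: "f r (fst (z (Suc k)) $ r) \<le> f r x + ereal (Q (Pu k r x) + (norm (x - fst (z k) $ r))^2 / (2 * lam k r)
    - Q (Mid k r) - (norm (fst (z (Suc k)) $ r - fst (z k) $ r))^2 / (2 * lam k r))"
proof -
  obtain a0 where a0: "f r (fst (z (Suc k)) $ r) = ereal a0" using fU_fin[of r k] by (cases "f r (fst (z (Suc k)) $ r)") auto
  obtain r0 where r0: "RestU k r = ereal r0" using RestU_fin[of k r] by (cases "RestU k r") auto
  have P: "L (Mid k r) + ereal ((norm (fst (z (Suc k)) $ r - fst (z k) $ r))^2 / (2 * lam k r))
   \<le> L (Pu k r x) + ereal ((norm (x - fst (z k) $ r))^2 / (2 * lam k r))" by (rule PU)
  have LM: "L (Mid k r) = ereal (a0 + r0 + Q (Mid k r))"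
    unfolding Mid_def L_Pu using a0 r0 by (simp add: Mid_def)
  show ?thesis
  proof (cases "f r x")
    case (real b)
    then have "a0 + r0 + Q (Mid k r) + (norm (fst (z (Suc k)) $ r - fst (z k) $ r))^2 / (2 * lam k r)
       \<le> b + r0 + Q (Pu k r x) + (norm (x - fst (z k) $ r))^2 / (2 * lam k r)"
      using P unfolding LM L_Pu r0 by simp
    then show ?thesis using a0 real by simp
  next
    case PInf then show ?thesis by simp
  next
    case MInf then show ?thesis using f_noninf by simp
  qed
qed

lemma ineqV: "g r (snd (z (Suc k)) $ r) \<le> g r y + ereal (Q (Pv k r y) + (norm (y - snd (z k) $ r))^2 / (2 * mu k r)
    - Q (Apt k r) - (norm (snd (z (Suc k)) $ r - snd (z k) $ r))^2 / (2 * mu k r))"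
proof -
  obtain a0 where a0: "g r (snd (z (Suc k)) $ r) = ereal a0" using gV_fin[of r k] by (cases "g r (snd (z (Suc k)) $ r)") auto
  obtain r0 where r0: "RestV k r = ereal r0" using RestV_fin[of k r] by (cases "RestV k r") auto
  have P: "L (Apt k r) + ereal ((norm (snd (z (Suc k)) $ r - snd (z k) $ r))^2 / (2 * mu k r))
   \<le> L (Pv k r y) + ereal ((norm (y - snd (z k) $ r))^2 / (2 * mu k r))" by (rule PV)
  have LM: "L (Apt k r) = ereal (a0 + r0 + Q (Apt k r))"
    unfolding Apt_def L_Pv using a0 r0 by (simp add: Apt_def)
  show ?thesis
  proof (cases "g r y")
    case (real b)
    then have "a0 + r0 + Q (Apt k r) + (norm (snd (z (Suc k)) $ r - snd (z k) $ r))^2 / (2 * mu k r)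
       \<le> b + r0 + Q (Pv k r y) + (norm (y - snd (z k) $ r))^2 / (2 * mu k r)"
      using P unfolding LM L_Pv r0 by simp
    then show ?thesis using a0 real by simp
  next
    case PInf then show ?thesis by simp
  next
    case MInf then show ?thesis using g_noninf by simp
  qed
qed

lemma Q_cont: "isCont Q x" using has_derivative_continuous[OF Q_grad] .

lemma conv_block3:
  assumes zs: "z \<longlonglongrightarrow> zs" and b: "\<And>k. block3 (P k) (z (Suc k)) (z k) zs"
  shows "P \<longlonglongrightarrow> zs"
proof -
  have n1: "(\<lambda>k. norm (z (Suc k) - zs)) \<longlonglongrightarrow> 0"
    by (intro tendsto_norm_zero LIM_zero LIMSEQ_Suc zs)
  have n2: "(\<lambda>k. norm (z k - zs)) \<longlonglongrightarrow> 0"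
    by (intro tendsto_norm_zero LIM_zero zs)
  have "(\<lambda>k. P k - zs) \<longlonglongrightarrow> 0"
    by (rule Lim_null_comparison[OF _ tendsto_add_zero[OF n1 n2]]) (use block3_norm[OF b] in \<open>auto intro: always_eventually\<close>)
  then show ?thesis by (rule LIM_zero_cancel)
qed

lemma quad_zero:
  assumes a: "(\<lambda>k. norm (a k)) \<longlonglongrightarrow> 0" and bnd: "\<And>k. norm (b k) \<le> norm (a k)"
    and lb: "\<And>k. rminus < l k"
  shows "(\<lambda>k. (norm (b k))^2 / (2 * l k)) \<longlonglongrightarrow> 0"
proof (rule tendsto_sandwich[where f = "\<lambda>_. 0" and h = "\<lambda>k. (norm (a k))^2 / (2 * rminus)"])
  show "eventually (\<lambda>k. 0 \<le> (norm (b k))^2 / (2 * l k)) sequentially"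
    using lb r_pos by (intro always_eventually allI) (smt (verit) divide_nonneg_pos zero_le_power2)
  show "eventually (\<lambda>k. (norm (b k))^2 / (2 * l k) \<le> (norm (a k))^2 / (2 * rminus)) sequentially"
  proof (intro always_eventually allI)
    fix k
    have "(norm (b k))^2 \<le> (norm (a k))^2" using bnd[of k] by (simp add: power_mono)
    then have "(norm (b k))^2 / (2 * l k) \<le> (norm (a k))^2 / (2 * l k)"
      using lb[of k] r_pos by (intro divide_right_mono) auto
    also have "\<dots> \<le> (norm (a k))^2 / (2 * rminus)"
      using lb[of k] r_pos by (intro divide_left_mono) auto
    finally show "(norm (b k))^2 / (2 * l k) \<le> (norm (a k))^2 / (2 * rminus)" .
  qed
  show "(\<lambda>k. 0) \<longlonglongrightarrow> (0::real)" by simp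
  have "(\<lambda>k. (norm (a k))^2 / (2 * rminus)) \<longlonglongrightarrow> 0^2 / (2 * rminus)"
    by (intro tendsto_divide tendsto_power a tendsto_const) (use r_pos in simp)
  then show "(\<lambda>k. (norm (a k))^2 / (2 * rminus)) \<longlonglongrightarrow> 0" by simp
qed

lemma f_conv:
  assumes zs: "z \<longlonglongrightarrow> zs" and dz: "(\<lambda>k. norm (z (Suc k) - z k)) \<longlonglongrightarrow> 0"
  shows "(\<lambda>k. f r (fst (z (Suc k)) $ r)) \<longlonglongrightarrow> f r (fst zs $ r)"
proof -
  have xc: "(\<lambda>k. fst (z (Suc k)) $ r) \<longlonglongrightarrow> fst zs $ r"
    by (intro tendsto_vec_nth tendsto_fst LIMSEQ_Suc zs)
  let ?x = "fst zs $ r"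
  have P1: "(\<lambda>k. Pu k r ?x) \<longlonglongrightarrow> zs"
    by (rule conv_block3[OF zs]) (auto simp: block3_def Pu_def mix_nth)
  have P2: "(\<lambda>k. Mid k r) \<longlonglongrightarrow> zs"
    by (rule conv_block3[OF zs]) (auto simp: block3_def Mid_def Pu_def mix_nth)
  have Q1: "(\<lambda>k. Q (Pu k r ?x)) \<longlonglongrightarrow> Q zs" by (rule isCont_tendsto_compose[OF Q_cont P1])
  have Q2: "(\<lambda>k. Q (Mid k r)) \<longlonglongrightarrow> Q zs" by (rule isCont_tendsto_compose[OF Q_cont P2])
  have n2: "(\<lambda>k. norm (zs - z k)) \<longlonglongrightarrow> 0"
  proof -
    have "(\<lambda>k. norm (z k - zs)) \<longlonglongrightarrow> 0" by (intro tendsto_norm_zero LIM_zero zs)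
    then show ?thesis by (simp add: norm_minus_commute)
  qed
  have q2: "(\<lambda>k. (norm (?x - fst (z k) $ r))^2 / (2 * lam k r)) \<longlonglongrightarrow> 0"
    by (rule quad_zero[OF n2]) (use norm_block_fst[of "zs - _" r] lam_bnd in auto)
  have q1: "(\<lambda>k. (norm (fst (z (Suc k)) $ r - fst (z k) $ r))^2 / (2 * lam k r)) \<longlonglongrightarrow> 0"
    by (rule quad_zero[OF dz]) (use norm_block_fst[of "z (Suc _) - z _" r] lam_bnd in auto)
  have "(\<lambda>k. Q (Pu k r ?x) + (norm (?x - fst (z k) $ r))^2 / (2 * lam k r)
    - Q (Mid k r) - (norm (fst (z (Suc k)) $ r - fst (z k) $ r))^2 / (2 * lam k r)) \<longlonglongrightarrow> Q zs + 0 - Q zs - 0"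
    by (intro tendsto_diff tendsto_add Q1 Q2 q1 q2)
  then have ec: "(\<lambda>k. Q (Pu k r ?x) + (norm (?x - fst (z k) $ r))^2 / (2 * lam k r)
    - Q (Mid k r) - (norm (fst (z (Suc k)) $ r - fst (z k) $ r))^2 / (2 * lam k r)) \<longlonglongrightarrow> 0" by simp
  show ?thesis by (rule attentive[OF f_lsc xc ineqU ec f_noninf])
qed

lemma g_conv:
  assumes zs: "z \<longlonglongrightarrow> zs" and dz: "(\<lambda>k. norm (z (Suc k) - z k)) \<longlonglongrightarrow> 0"
  shows "(\<lambda>k. g r (snd (z (Suc k)) $ r)) \<longlonglongrightarrow> g r (snd zs $ r)"
proof -
  have xc: "(\<lambda>k. snd (z (Suc k)) $ r) \<longlonglongrightarrow> snd zs $ r"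
    by (intro tendsto_vec_nth tendsto_snd LIMSEQ_Suc zs)
  let ?x = "snd zs $ r"
  have P1: "(\<lambda>k. Pv k r ?x) \<longlonglongrightarrow> zs"
    by (rule conv_block3[OF zs]) (auto simp: block3_def Pv_def mix_nth)
  have P2: "(\<lambda>k. Apt k r) \<longlonglongrightarrow> zs"
    by (rule conv_block3[OF zs]) (auto simp: block3_def Apt_def Pv_def mix_nth)
  have Q1: "(\<lambda>k. Q (Pv k r ?x)) \<longlonglongrightarrow> Q zs" by (rule isCont_tendsto_compose[OF Q_cont P1])
  have Q2: "(\<lambda>k. Q (Apt k r)) \<longlonglongrightarrow> Q zs" by (rule isCont_tendsto_compose[OF Q_cont P2])
  have n2: "(\<lambda>k. norm (zs - z k)) \<longlonglongrightarrow> 0"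
  proof -
    have "(\<lambda>k. norm (z k - zs)) \<longlonglongrightarrow> 0" by (intro tendsto_norm_zero LIM_zero zs)
    then show ?thesis by (simp add: norm_minus_commute)
  qed
  have q2: "(\<lambda>k. (norm (?x - snd (z k) $ r))^2 / (2 * mu k r)) \<longlonglongrightarrow> 0"
    by (rule quad_zero[OF n2]) (use norm_block_snd[of "zs - _" r] mu_bnd in auto)
  have q1: "(\<lambda>k. (norm (snd (z (Suc k)) $ r - snd (z k) $ r))^2 / (2 * mu k r)) \<longlonglongrightarrow> 0"
    by (rule quad_zero[OF dz]) (use norm_block_snd[of "z (Suc _) - z _" r] mu_bnd in auto)
  have "(\<lambda>k. Q (Pv k r ?x) + (norm (?x - snd (z k) $ r))^2 / (2 * mu k r)
    - Q (Apt k r) - (norm (snd (z (Suc k)) $ r - snd (z k) $ r))^2 / (2 * mu k r)) \<longlonglongrightarrow> Q zs + 0 - Q zs - 0"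
    by (intro tendsto_diff tendsto_add Q1 Q2 q1 q2)
  then have ec: "(\<lambda>k. Q (Pv k r ?x) + (norm (?x - snd (z k) $ r))^2 / (2 * mu k r)
    - Q (Apt k r) - (norm (snd (z (Suc k)) $ r - snd (z k) $ r))^2 / (2 * mu k r)) \<longlonglongrightarrow> 0" by simp
  show ?thesis by (rule attentive[OF g_lsc xc ineqV ec g_noninf])
qed

lemma L_conv:
  assumes zs: "z \<longlonglongrightarrow> zs" and dz: "(\<lambda>k. norm (z (Suc k) - z k)) \<longlonglongrightarrow> 0"
  shows "(\<lambda>k. L (z (Suc k))) \<longlonglongrightarrow> L zs"
proof -
  have F: "(\<lambda>k. \<Sum>r\<in>UNIV. f r (fst (z (Suc k)) $ r)) \<longlonglongrightarrow> (\<Sum>r\<in>UNIV. f r (fst zs $ r))"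
    by (rule tendsto_sum_ereal_nonneg[OF f_conv[OF zs dz] f_noninf])
  have G: "(\<lambda>k. \<Sum>r\<in>UNIV. g r (snd (z (Suc k)) $ r)) \<longlonglongrightarrow> (\<Sum>r\<in>UNIV. g r (snd zs $ r))"
    by (rule tendsto_sum_ereal_nonneg[OF g_conv[OF zs dz] g_noninf])
  have Qc: "(\<lambda>k. ereal (Q (z (Suc k)))) \<longlonglongrightarrow> ereal (Q zs)"
    by (intro tendsto_ereal isCont_tendsto_compose[OF Q_cont] LIMSEQ_Suc zs)
  have nF: "(\<Sum>r\<in>UNIV. f r (fst zs $ r)) \<noteq> -\<infinity>" by (rule sum_noninf) (rule f_noninf)
  have nG: "(\<Sum>r\<in>UNIV. g r (snd zs $ r)) \<noteq> -\<infinity>" by (rule sum_noninf) (rule g_noninf)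
  have FQ: "(\<lambda>k. (\<Sum>r\<in>UNIV. f r (fst (z (Suc k)) $ r)) + ereal (Q (z (Suc k)))) \<longlonglongrightarrow>
      (\<Sum>r\<in>UNIV. f r (fst zs $ r)) + ereal (Q zs)"
    by (rule tendsto_add_ereal_nonneg[OF nF _ F Qc]) simp
  have nFQ: "(\<Sum>r\<in>UNIV. f r (fst zs $ r)) + ereal (Q zs) \<noteq> -\<infinity>" using nF by simp
  have "(\<lambda>k. (\<Sum>r\<in>UNIV. f r (fst (z (Suc k)) $ r)) + ereal (Q (z (Suc k))) + (\<Sum>r\<in>UNIV. g r (snd (z (Suc k)) $ r))) \<longlonglongrightarrow>
      (\<Sum>r\<in>UNIV. f r (fst zs $ r)) + ereal (Q zs) + (\<Sum>r\<in>UNIV. g r (snd zs $ r))"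
    by (rule tendsto_add_ereal_nonneg[OF nFQ nG FQ G])
  then show ?thesis unfolding L_def Lfun_def .
qed

end

theorem mainTheorem13:
  fixes f :: "'r::{finite,linorder} \<Rightarrow> real^'n1 \<Rightarrow> ereal"
    and g :: "'r \<Rightarrow> real^'n2 \<Rightarrow> ereal"
    and Q :: "('n1,'n2,'r) pt \<Rightarrow> real"
    and gradQ :: "('n1,'n2,'r) pt \<Rightarrow> ('n1,'n2,'r) pt"
    and lam mu :: "nat \<Rightarrow> 'r \<Rightarrow> real"
    and rminus rplus :: real
    and z :: "nat \<Rightarrow> ('n1,'n2,'r) pt"
    and zbar :: "('n1,'n2,'r) pt"
    and \<eta> :: ereal and U :: "('n1,'n2,'r) pt set" and \<phi> :: "real \<Rightarrow> real"
    and \<rho> C M :: real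
  defines "L \<equiv> Lfun f Q g"
  (* (H) *)
  assumes f_proper: "\<And>r. proper_fun (f r)" and f_lsc: "\<And>r. lsc_fun (f r)"
    and g_proper: "\<And>r. proper_fun (g r)" and g_lsc: "\<And>r. lsc_fun (g r)"
    and Q_grad: "\<And>x. (Q has_derivative (\<lambda>h. inner (gradQ x) h)) (at x)"
    and gradQ_cont: "continuous_on UNIV gradQ"
    and gradQ_lip: "\<And>S. bounded S \<Longrightarrow> \<exists>K. K-lipschitz_on S gradQ"
  (* (H1) *)
    and L_bdd_below: "\<exists>m::real. \<forall>x. ereal m \<le> L x"
    and L_first_proper:
      "proper_fun (\<lambda>x. L (mix (fst (z 0)) (fst (z 0)) (Min UNIV) x, snd (z 0)))"
    and r_pos: "0 < rminus" and r_lt: "rminus < rplus"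
    and lam_bnd: "\<And>k r. rminus < lam k r \<and> lam k r < rplus"
    and mu_bnd: "\<And>k r. rminus < mu k r \<and> mu k r < rplus"
  (* KL property and constants *)
    and KL: "KL_at L zbar \<eta> U \<phi>"
    and rho_pos: "\<rho> > 0" and ball_U: "ball zbar \<rho> \<subseteq> U"
    and C_lip: "C-lipschitz_on (ball zbar (sqrt (2 * real CARD('r)) * \<rho>)) gradQ"
    and M_def: "M = 2 * rplus * (C * sqrt (2 * real CARD('r)) + 1 / rminus)"
  (* PAM sequence *)
    and PAM: "PAM_seq L lam mu z"
    and l_bounds: "\<And>k. L zbar < L (z k) \<and> L (z k) < L zbar + \<eta>"
    and init: "M * \<phi> (real_of_ereal (L (z 0)) - real_of_ereal (L zbar))
               + 2 * sqrt (2 * rplus) * sqrt (real_of_ereal (L (z 0)) - real_of_ereal (L zbar))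
               + norm (z 0 - zbar) < \<rho>"
  shows "(\<exists>zs. z \<longlonglongrightarrow> zs \<and> 0 \<in> limiting_subdiff L zs)
    \<and> (\<forall>k. z k \<in> ball zbar \<rho>)
    \<and> (\<forall>k. summable (\<lambda>j. norm (z (j + k + 2) - z (j + k + 1)))
         \<and> (\<Sum>j. norm (z (j + k + 2) - z (j + k + 1)))
             \<le> M * \<phi> (real_of_ereal (L (z k)) - real_of_ereal (L zbar))
               + sqrt (2 * rplus) * sqrt (real_of_ereal (L (z k)) - real_of_ereal (L zbar)))"
proof -
  have lfin: "\<bar>L (z k)\<bar> \<noteq> \<infinity>" for k
  proof -
    obtain m where m: "\<forall>x. ereal m \<le> L x" using L_bdd_below by blast
    have "L (z k) \<noteq> -\<infinity>" using m[rule_format, of "z k"] by auto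
    moreover have "L (z k) \<noteq> \<infinity>" using l_bounds[of k] by auto
    ultimately show ?thesis by auto
  qed
  interpret I: pamKL f g Q gradQ lam mu rminus rplus z L zbar \<eta> U \<phi> \<rho> C M
  proof (unfold_locales)
    show "L = Lfun f Q g" unfolding L_def ..
  qed (use f_proper f_lsc g_proper g_lsc Q_grad L_bdd_below r_pos r_lt lam_bnd mu_bnd PAM lfin
        KL rho_pos ball_U C_lip M_def l_bounds init in auto)
  obtain zs where zs: "z \<longlonglongrightarrow> zs" using I.z_conv by blast
  have dz: "(\<lambda>k. norm (z (Suc k) - z k)) \<longlonglongrightarrow> 0"
    using summable_LIMSEQ_zero[OF I.d_summable] unfolding I.d_def .
  have crit: "0 \<in> limiting_subdiff L zs"
    unfolding limiting_subdiff_def mem_Collect_eq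
  proof (rule exI[where x="\<lambda>k. z (Suc k)"], rule exI[where x="I.W"], intro conjI allI)
    show "(\<lambda>k. z (Suc k)) \<longlonglongrightarrow> zs" by (rule LIMSEQ_Suc[OF zs])
    show "(\<lambda>k. L (z (Suc k))) \<longlonglongrightarrow> L zs" by (rule I.L_conv[OF zs dz])
    show "I.W k \<in> frechet_subdiff L (z (Suc k))" for k by (rule I.W_frechet)
    show "I.W \<longlonglongrightarrow> 0" by (rule I.W_tendsto)
  qed
  have balls: "\<forall>k. z k \<in> ball zbar \<rho>" using I.allB unfolding I.B_def by blast
  have eqf: "(\<lambda>j. norm (z (j + k + 2) - z (j + k + 1))) = (\<lambda>j. I.d (j + k + 1))" for k
  proof
    fix j
    have "j + k + 2 = Suc (j + k + 1)" by simp
    then show "norm (z (j + k + 2) - z (j + k + 1)) = I.d (j + k + 1)" unfolding I.d_def by simp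
  qed
  have tails: "\<forall>k. summable (\<lambda>j. norm (z (j + k + 2) - z (j + k + 1)))
         \<and> (\<Sum>j. norm (z (j + k + 2) - z (j + k + 1)))
             \<le> M * \<phi> (real_of_ereal (L (z k)) - real_of_ereal (L zbar))
               + sqrt (2 * rplus) * sqrt (real_of_ereal (L (z k)) - real_of_ereal (L zbar))"
  proof
    fix k
    show "summable (\<lambda>j. norm (z (j + k + 2) - z (j + k + 1)))
         \<and> (\<Sum>j. norm (z (j + k + 2) - z (j + k + 1)))
             \<le> M * \<phi> (real_of_ereal (L (z k)) - real_of_ereal (L zbar))
               + sqrt (2 * rplus) * sqrt (real_of_ereal (L (z k)) - real_of_ereal (L zbar))"
      unfolding eqf using I.tail_summable[of k] I.tail_sum[of k]
      unfolding I.ph_def I.l_def I.lb_def by simp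
  qed
  show ?thesis using zs crit balls tails by blast
qed

end
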